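(* Let $U$ be a $d\times d$ unitary matrix, $U_{ij}=\langle a_i|b_j\rangle$ for two orthonormal bases $\{|a_i\rangle\}$, $\{|b_j\rangle\}$ of $\mathbb{C}^d$, and let $p_i=\langle a_i|\rho|a_i\rangle$, $q_j=\langle b_j|\rho|b_j\rangle$ for a state $\rho$ on $\mathbb{C}^d$. For $k=1,\dots,d$ let $s_k=\max\{\|M\|: M \text{ a submatrix of } U \text{ with } \#\mathrm{cols}(M)+\#\mathrm{rows}(M)=k+1\}$, where $\|M\|$ is the largest singular value, and let $W=(s_1,s_2-s_1,\dots,s_d-s_{d-1})$. Then for every Rényi order $0<\alpha\le 1$ (with $\alpha=1$ meaning the Shannon entropy), $$H_\alpha(p)+H_\alpha(q)\ge H_\alpha(W).$$
   Context: The Rényi entropy of order $\alpha\neq1$ of a probability vector $x$ is $H_\alpha(x)=\frac{1}{1-\alpha}\ln\sum_i x_i^\alpha$; its limit $\alpha\to1$ is the Shannon entropy $H(x)=-\sum_i x_i\ln x_i$ (with $0\ln 0=0$). A submatrix is obtained by selecting a nonempty set of rows and a nonempty set of columns. *)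

theory Defs
  imports Complex_Main
begin

text \<open>Vectors of C^d are represented as functions nat => complex, only the
  entries with index < d being relevant; matrices as nat => nat => complex.\<close>

definition cinner :: "nat \<Rightarrow> (nat \<Rightarrow> complex) \<Rightarrow> (nat \<Rightarrow> complex) \<Rightarrow> complex" where
  "cinner d x y = (\<Sum>k<d. cnj (x k) * y k)"

definition orthonormal_basis :: "nat \<Rightarrow> (nat \<Rightarrow> nat \<Rightarrow> complex) \<Rightarrow> bool" where
  "orthonormal_basis d a \<longleftrightarrow>
     (\<forall>i<d. \<forall>j<d. cinner d (a i) (a j) = (if i = j then 1 else 0))"

definition unitary_mat :: "nat \<Rightarrow> (nat \<Rightarrow> nat \<Rightarrow> complex) \<Rightarrow> bool" where
  "unitary_mat d U \<longleftrightarrow>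
     (\<forall>i<d. \<forall>j<d. (\<Sum>k<d. cnj (U k i) * U k j) = (if i = j then 1 else 0)) \<and>
     (\<forall>i<d. \<forall>j<d. (\<Sum>k<d. U i k * cnj (U j k)) = (if i = j then 1 else 0))"

definition mat_vec :: "nat \<Rightarrow> (nat \<Rightarrow> nat \<Rightarrow> complex) \<Rightarrow> (nat \<Rightarrow> complex) \<Rightarrow> (nat \<Rightarrow> complex)" where
  "mat_vec d A x = (\<lambda>i. \<Sum>j<d. A i j * x j)"

definition density_matrix :: "nat \<Rightarrow> (nat \<Rightarrow> nat \<Rightarrow> complex) \<Rightarrow> bool" where
  "density_matrix d \<rho> \<longleftrightarrow>
     (\<forall>i<d. \<forall>j<d. \<rho> j i = cnj (\<rho> i j)) \<and>
     (\<forall>x. 0 \<le> Re (cinner d x (mat_vec d \<rho> x))) \<and>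
     (\<Sum>i<d. \<rho> i i) = 1"

definition submatrix_norm :: "(nat \<Rightarrow> nat \<Rightarrow> complex) \<Rightarrow> nat set \<Rightarrow> nat set \<Rightarrow> real" where
  "submatrix_norm U R C =
     Sup {sqrt (\<Sum>i\<in>R. (cmod (\<Sum>j\<in>C. U i j * x j))\<^sup>2) | x.
            (\<Sum>j\<in>C. (cmod (x j))\<^sup>2) \<le> 1}"

definition s_coef :: "nat \<Rightarrow> (nat \<Rightarrow> nat \<Rightarrow> complex) \<Rightarrow> nat \<Rightarrow> real" where
  "s_coef d U k = Max {submatrix_norm U R C | R C.
       R \<subseteq> {..<d} \<and> C \<subseteq> {..<d} \<and> R \<noteq> {} \<and> C \<noteq> {} \<and> card R + card C = k + 1}"

definition W_vec :: "nat \<Rightarrow> (nat \<Rightarrow> nat \<Rightarrow> complex) \<Rightarrow> nat \<Rightarrow> real" where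
  "W_vec d U k = (if k = 1 then s_coef d U 1 else s_coef d U k - s_coef d U (k - 1))"

text \<open>Renyi entropy of order alpha of the vector x over the index set A;
  alpha = 1 gives Shannon entropy (ln 0 = 0 in Isabelle, so 0 ln 0 = 0).\<close>
definition renyi :: "real \<Rightarrow> nat set \<Rightarrow> (nat \<Rightarrow> real) \<Rightarrow> real" where
  "renyi \<alpha> A x = (if \<alpha> = 1 then - (\<Sum>i\<in>A. x i * ln (x i))
                   else ln (\<Sum>i\<in>A. x i powr \<alpha>) / (1 - \<alpha>))"

end

theory Submission imports Defs "HOL-Analysis.L2_Norm" "Jordan_Normal_Form.Determinant" begin

lemma sum_delta_mult:
  "k < (N::nat) \<Longrightarrow> (\<Sum>l<N. f l * (if l = k then (c::complex) else 0)) = f k * c"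
  by (simp add: if_distrib[of "\<lambda>t. _ * t"] cong: if_cong)

lemma quad_one:
  fixes k N :: nat and \<rho> :: "nat \<Rightarrow> nat \<Rightarrow> complex"
  assumes "k < N"
  shows "(\<Sum>j<N. cnj ((\<lambda>j. if j = k then u else 0) j) * (\<Sum>l<N. \<rho> j l * (\<lambda>j. if j = k then u else 0) l))
     = cnj u * \<rho> k k * u"
proof -
  have i: "(\<Sum>l<N. \<rho> j l * (if l = k then u else 0)) = \<rho> j k * u" for j
    using sum_delta_mult[OF assms, of "\<rho> j"] by simp
  have "(\<Sum>j<N. cnj (if j = k then u else 0) * (\<rho> j k * u)) = (\<Sum>j<N. (\<rho> j k * u) * (if j = k then cnj u else 0))"
    by (rule sum.cong) auto
  also have "\<dots> = \<rho> k k * u * cnj u" using sum_delta_mult[OF assms, of "\<lambda>j. \<rho> j k * u"] by simp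
  finally show ?thesis by (simp add: i)
qed

lemma quad_two:
  fixes k n N :: nat and \<rho> :: "nat \<Rightarrow> nat \<Rightarrow> complex"
  assumes "k < N" "n < N" "k \<noteq> n"
  shows "(\<Sum>j<N. cnj ((\<lambda>j. if j = k then u else if j = n then c else 0) j) *
            (\<Sum>l<N. \<rho> j l * (\<lambda>j. if j = k then u else if j = n then c else 0) l))
     = cnj u * (\<rho> k k * u + \<rho> k n * c) + cnj c * (\<rho> n k * u + \<rho> n n * c)"
proof -
  let ?x = "\<lambda>j. if j = k then u else if j = n then c else 0"
  have x: "?x j = (if j = k then u else 0) + (if j = n then c else 0)" for j
    using assms by auto
  have inner: "(\<Sum>l<N. \<rho> j l * ?x l) = \<rho> j k * u + \<rho> j n * c" for j
    unfolding x distrib_left sum.distrib using sum_delta_mult[OF assms(1), of "\<rho> j"] sum_delta_mult[OF assms(2), of "\<rho> j"] by simp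
  have "(\<Sum>j<N. cnj (?x j) * (\<rho> j k * u + \<rho> j n * c)) =
     (\<Sum>j<N. (\<rho> j k * u + \<rho> j n * c) * (if j = k then cnj u else 0) + (\<rho> j k * u + \<rho> j n * c) * (if j = n then cnj c else 0))"
    using assms by (intro sum.cong) (auto simp: x algebra_simps)
  also have "\<dots> = (\<rho> k k * u + \<rho> k n * c) * cnj u + (\<rho> n k * u + \<rho> n n * c) * cnj c"
    unfolding sum.distrib using assms by (simp add: sum_delta_mult)
  finally have "(\<Sum>j<N. cnj (?x j) * (\<rho> j k * u + \<rho> j n * c)) =
     cnj u * (\<rho> k k * u + \<rho> k n * c) + cnj c * (\<rho> n k * u + \<rho> n n * c)"
    by (simp only: mult.commute)
  thus ?thesis by (simp only: inner)
qed

definition psd :: "nat \<Rightarrow> (nat \<Rightarrow> nat \<Rightarrow> complex) \<Rightarrow> bool" where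
  "psd n \<rho> \<longleftrightarrow> (\<forall>i<n. \<forall>j<n. \<rho> j i = cnj (\<rho> i j)) \<and>
     (\<forall>x. 0 \<le> Re (\<Sum>k<n. cnj (x k) * (\<Sum>l<n. \<rho> k l * x l)))"

lemma psd_quad: assumes "psd n \<rho>" shows "0 \<le> Re (\<Sum>k<n. cnj (x k) * (\<Sum>l<n. \<rho> k l * x l))"
proof -
  from assms have "\<forall>x. 0 \<le> Re (\<Sum>k<n. cnj (x k) * (\<Sum>l<n. \<rho> k l * x l))" unfolding psd_def by (rule conjunct2)
  thus ?thesis by (rule spec)
qed

lemma psd_herm: assumes "psd n \<rho>" "i < n" "j < n" shows "\<rho> j i = cnj (\<rho> i j)"
proof -
  from assms(1) have "\<forall>i<n. \<forall>j<n. \<rho> j i = cnj (\<rho> i j)" unfolding psd_def by (rule conjunct1)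
  thus ?thesis using assms(2,3) by blast
qed

lemma psd_diag:
  assumes "psd n \<rho>" "k < n"
  shows "\<rho> k k = complex_of_real (Re (\<rho> k k))" "0 \<le> Re (\<rho> k k)"
proof -
  have "\<rho> k k = cnj (\<rho> k k)" using psd_herm[OF assms(1,2,2)] .
  hence "\<rho> k k \<in> \<real>" using Reals_cnj_iff[of "\<rho> k k"] by simp
  thus "\<rho> k k = complex_of_real (Re (\<rho> k k))" by (simp add: of_real_Re)
  have "0 \<le> Re (\<Sum>j<n. cnj ((\<lambda>j. if j = k then 1 else 0) j) * (\<Sum>l<n. \<rho> j l * (\<lambda>j. if j = k then 1 else 0) l))"
    by (rule psd_quad[OF assms(1)])
  thus "0 \<le> Re (\<rho> k k)" using quad_one[OF assms(2), of 1 \<rho>] by simp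
qed

lemma psd_zero_diag:
  assumes "psd (Suc n) \<rho>" "\<rho> n n = 0" "k < n"
  shows "\<rho> k n = 0"
proof (rule ccontr)
  let ?b = "\<rho> k n"
  assume b: "?b \<noteq> 0"
  have herm: "\<rho> n k = cnj ?b" using psd_herm[OF assms(1), of k n] assms(3) by simp
  define r where "r = Re (\<rho> k k)"
  have rkk: "\<rho> k k = of_real r" "0 \<le> r" using psd_diag[OF assms(1), of k] assms(3) by (auto simp: r_def)
  define \<tau> where "\<tau> = (r + 1) / (cmod ?b)\<^sup>2"
  have bpos: "0 < (cmod ?b)\<^sup>2" using b by simp
  define c where "c = - of_real \<tau> * cnj ?b"
  have "0 \<le> Re (\<Sum>j<Suc n. cnj ((\<lambda>j. if j = k then 1 else if j = n then c else 0) j) *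
            (\<Sum>l<Suc n. \<rho> j l * (\<lambda>j. if j = k then 1 else if j = n then c else 0) l))"
    by (rule psd_quad[OF assms(1)])
  also have "\<dots> = Re (\<rho> k k + ?b * c + cnj c * cnj ?b)"
    using quad_two[of k "Suc n" n 1 c \<rho>] assms herm by simp
  also have "?b * c = - of_real \<tau> * (?b * cnj ?b)" by (simp add: c_def)
  also have "cnj c * cnj ?b = - of_real \<tau> * (?b * cnj ?b)" by (simp add: c_def)
  also have "?b * cnj ?b = of_real ((cmod ?b)\<^sup>2)" by (rule complex_norm_square[symmetric])
  also have "Re (\<rho> k k + - complex_of_real \<tau> * complex_of_real ((cmod ?b)\<^sup>2) +
      - complex_of_real \<tau> * complex_of_real ((cmod ?b)\<^sup>2)) = r - 2 * \<tau> * (cmod ?b)\<^sup>2"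
    by (simp add: rkk)
  also have "\<dots> = r - 2 * (r + 1)" using bpos by (simp add: \<tau>_def)
  finally show False using rkk by simp
qed

lemma schur_psd:
  fixes \<rho> :: "nat \<Rightarrow> nat \<Rightarrow> complex"
  assumes "psd (Suc n) \<rho>" "\<rho> n n \<noteq> 0"
  shows "psd n (\<lambda>k l. \<rho> k l - \<rho> k n * \<rho> n l / \<rho> n n)"
  unfolding psd_def
proof (intro conjI allI impI)
  have herm: "\<And>i j. i < Suc n \<Longrightarrow> j < Suc n \<Longrightarrow> \<rho> j i = cnj (\<rho> i j)"
    using psd_herm[OF assms(1)] by blast
  have rnn: "cnj (\<rho> n n) = \<rho> n n" using herm[of n n] by simp
  fix i j assume ij: "i < n" "j < n"
  show "\<rho> j i - \<rho> j n * \<rho> n i / \<rho> n n = cnj (\<rho> i j - \<rho> i n * \<rho> n j / \<rho> n n)"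
    using herm[of i j] herm[of i n] herm[of n j] ij rnn by (simp add: mult.commute)
next
  fix x :: "nat \<Rightarrow> complex"
  have herm: "\<And>i j. i < Suc n \<Longrightarrow> j < Suc n \<Longrightarrow> \<rho> j i = cnj (\<rho> i j)"
    using psd_herm[OF assms(1)] by blast
  define \<beta> where "\<beta> = (\<Sum>l<n. \<rho> n l * x l)"
  define t where "t = - \<beta> / \<rho> n n"
  define x' where "x' = (\<lambda>k. if k < n then x k else t)"
  have inner: "(\<Sum>l<Suc n. \<rho> k l * x' l) = (\<Sum>l<n. \<rho> k l * x l) + \<rho> k n * t" for k
    by (simp add: x'_def)
  have inner': "(\<Sum>l<n. (\<rho> k l - \<rho> k n * \<rho> n l / \<rho> n n) * x l) = (\<Sum>l<n. \<rho> k l * x l) + \<rho> k n * t" for k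
  proof -
    have "(\<Sum>l<n. (\<rho> k l - \<rho> k n * \<rho> n l / \<rho> n n) * x l) =
       (\<Sum>l<n. \<rho> k l * x l) - \<rho> k n / \<rho> n n * \<beta>"
      by (simp add: \<beta>_def sum_distrib_left left_diff_distrib sum_subtractf algebra_simps)
    thus ?thesis by (simp add: t_def)
  qed
  have nt: "\<beta> + \<rho> n n * t = 0" using assms(2) by (simp add: t_def)
  have "(\<Sum>k<Suc n. cnj (x' k) * (\<Sum>l<Suc n. \<rho> k l * x' l)) =
        (\<Sum>k<n. cnj (x k) * ((\<Sum>l<n. \<rho> k l * x l) + \<rho> k n * t)) + cnj t * (\<beta> + \<rho> n n * t)"
    unfolding inner by (simp add: x'_def \<beta>_def)
  also have "\<dots> = (\<Sum>k<n. cnj (x k) * (\<Sum>l<n. (\<rho> k l - \<rho> k n * \<rho> n l / \<rho> n n) * x l))"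
    unfolding inner' nt by simp
  finally have eq: "(\<Sum>k<Suc n. cnj (x' k) * (\<Sum>l<Suc n. \<rho> k l * x' l)) =
     (\<Sum>k<n. cnj (x k) * (\<Sum>l<n. (\<rho> k l - \<rho> k n * \<rho> n l / \<rho> n n) * x l))" .
  have "0 \<le> Re (\<Sum>k<Suc n. cnj (x' k) * (\<Sum>l<Suc n. \<rho> k l * x' l))"
    by (rule psd_quad[OF assms(1)])
  thus "0 \<le> Re (\<Sum>k<n. cnj (x k) * (\<Sum>l<n. (\<rho> k l - \<rho> k n * \<rho> n l / \<rho> n n) * x l))"
    by (simp only: eq)
qed

lemma psd_restrict:
  assumes "psd (Suc n) \<rho>" shows "psd n \<rho>"
  unfolding psd_def
proof (intro conjI allI impI)
  fix i j assume "i < n" "j < n" thus "\<rho> j i = cnj (\<rho> i j)" by (intro psd_herm[OF assms]) auto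
next
  fix x :: "nat \<Rightarrow> complex"
  define x' where "x' = (\<lambda>k. if k < n then x k else 0)"
  have "0 \<le> Re (\<Sum>k<Suc n. cnj (x' k) * (\<Sum>l<Suc n. \<rho> k l * x' l))"
    by (rule psd_quad[OF assms])
  also have "(\<Sum>k<Suc n. cnj (x' k) * (\<Sum>l<Suc n. \<rho> k l * x' l)) = (\<Sum>k<n. cnj (x k) * (\<Sum>l<n. \<rho> k l * x l))"
    by (simp add: x'_def)
  finally show "0 \<le> Re (\<Sum>k<n. cnj (x k) * (\<Sum>l<n. \<rho> k l * x l))" .
qed

lemma aux_div_cnj: "(a / complex_of_real s) * cnj (b / complex_of_real s) = a * cnj b / (complex_of_real s * complex_of_real s)"
  by (simp add: times_divide_times_eq)

lemma psd_gram:
  "psd n \<rho> \<Longrightarrow> \<exists>v. \<forall>k<n. \<forall>l<n. \<rho> k l = (\<Sum>m<n. v m k * cnj (v m l))"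
proof (induction n arbitrary: \<rho>)
  case 0 show ?case by simp
next
  case (Suc n)
  have herm: "\<And>i j. i < Suc n \<Longrightarrow> j < Suc n \<Longrightarrow> \<rho> j i = cnj (\<rho> i j)"
    using psd_herm[OF Suc.prems] by blast
  show ?case
  proof (cases "\<rho> n n = 0")
    case True
    have z1: "\<rho> k n = 0" if "k < Suc n" for k
      using psd_zero_diag[OF Suc.prems True, of k] True that by (cases "k = n") auto
    have z2: "\<rho> n k = 0" if "k < Suc n" for k using herm[of k n] z1[of k] that by simp
    obtain v where v: "\<forall>k<n. \<forall>l<n. \<rho> k l = (\<Sum>m<n. v m k * cnj (v m l))"
      using Suc.IH[OF psd_restrict[OF Suc.prems]] by blast
    define V where "V = (\<lambda>m k. if m < n \<and> k < n then v m k else 0)"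
    have "\<rho> k l = (\<Sum>m<Suc n. V m k * cnj (V m l))" if "k < Suc n" "l < Suc n" for k l
    proof (cases "k < n \<and> l < n")
      case True thus ?thesis using v by (simp add: V_def)
    next
      case False
      hence "k = n \<or> l = n" using that by auto
      thus ?thesis using z1 z2 that by (auto simp: V_def)
    qed
    thus ?thesis by blast
  next
    case False
    note nz = False
    define r where "r = Re (\<rho> n n)"
    have rr: "\<rho> n n = of_real r" "0 \<le> r" unfolding r_def
      by (rule psd_diag(1)[OF Suc.prems], simp) (rule psd_diag(2)[OF Suc.prems], simp)
    have rpos: "0 < r" using rr False by auto
    obtain v where v: "\<forall>k<n. \<forall>l<n. \<rho> k l - \<rho> k n * \<rho> n l / \<rho> n n = (\<Sum>m<n. v m k * cnj (v m l))"
      using Suc.IH[OF schur_psd[OF Suc.prems False]] by blast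
    define w where "w = (\<lambda>k. \<rho> k n / of_real (sqrt r))"
    have ww: "w k * cnj (w l) = \<rho> k n * \<rho> n l / \<rho> n n" if "l < Suc n" for k l
    proof -
      have "w k * cnj (w l) = \<rho> k n * cnj (\<rho> l n) / (of_real (sqrt r) * of_real (sqrt r))"
        unfolding w_def by (rule aux_div_cnj)
      also have "of_real (sqrt r) * of_real (sqrt r) = (of_real r :: complex)"
        using rr(2) by (simp flip: of_real_mult)
      also have "cnj (\<rho> l n) = \<rho> n l" using herm[of l n] that by simp
      finally show ?thesis by (simp only: rr(1))
    qed
    define V where "V = (\<lambda>m k. if m < n then (if k < n then v m k else 0) else w k)"
    have "\<rho> k l = (\<Sum>m<Suc n. V m k * cnj (V m l))" if "k < Suc n" "l < Suc n" for k l
    proof -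
      have "(\<Sum>m<Suc n. V m k * cnj (V m l)) =
        (\<Sum>m<n. (if k < n then v m k else 0) * cnj (if l < n then v m l else 0)) + w k * cnj (w l)"
        by (simp add: V_def)
      also have "\<dots> = \<rho> k l"
      proof (cases "k < n \<and> l < n")
        case True
        hence "(\<Sum>m<n. (if k < n then v m k else 0) * cnj (if l < n then v m l else 0)) =
               \<rho> k l - \<rho> k n * \<rho> n l / \<rho> n n" using v by simp
        thus ?thesis using ww[where k=k and l=l] that by simp
      next
        case False
        hence s0: "(\<Sum>m<n. (if k < n then v m k else 0) * cnj (if l < n then v m l else 0)) = 0" by auto
        have "k = n \<or> l = n" using that False by auto
        thus ?thesis
        proof
          assume "k = n" thus ?thesis using ww[where k=k and l=l] that s0 nz by simp
        next
          assume "l = n" thus ?thesis using ww[where k=k and l=l] that s0 nz by simp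
        qed
      qed
      finally show ?thesis by simp
    qed
    thus ?thesis by blast
  qed
qed

lemma ortho_complete:
  assumes "orthonormal_basis d a" and "k < d" and "l < d"
  shows "(\<Sum>i<d. cnj (a i k) * a i l) = (if k = l then 1 else 0)"
proof -
  define M where "M = mat d d (\<lambda>(i,k). cnj (a i k))"
  define N where "N = mat d d (\<lambda>(k,j). a j k)"
  have M: "M \<in> carrier_mat d d" and N: "N \<in> carrier_mat d d" by (auto simp: M_def N_def)
  have "M * N = 1\<^sub>m d"
  proof (rule eq_matI)
    fix i j assume ij: "i < dim_row (1\<^sub>m d)" "j < dim_col (1\<^sub>m d)"
    hence "(M * N) $$ (i, j) = (\<Sum>k = 0..<d. cnj (a i k) * a j k)"
      by (auto simp: M_def N_def scalar_prod_def)
    also have "\<dots> = cinner d (a i) (a j)" by (simp add: cinner_def atLeast0LessThan)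
    also have "\<dots> = 1\<^sub>m d $$ (i, j)" using assms(1) ij by (auto simp: orthonormal_basis_def)
    finally show "(M * N) $$ (i, j) = 1\<^sub>m d $$ (i, j)" .
  qed (auto simp: M_def N_def)
  hence NM: "N * M = 1\<^sub>m d" using mat_mult_left_right_inverse[OF M N] by blast
  have "(N * M) $$ (l, k) = (\<Sum>i = 0..<d. a i l * cnj (a i k))"
    using assms by (auto simp: M_def N_def scalar_prod_def)
  hence "(\<Sum>i<d. a i l * cnj (a i k)) = (if k = l then 1 else 0)"
    using NM assms by (auto simp: atLeast0LessThan)
  thus ?thesis by (simp add: mult.commute)
qed

lemma cinner_lin_right: "cinner d u (\<lambda>k. \<Sum>j\<in>T. \<delta> j * b j k) = (\<Sum>j\<in>T. \<delta> j * cinner d u (b j))"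
  unfolding cinner_def by (simp add: sum_distrib_left sum.swap[of _ T] mult.left_commute)

lemma cinner_lin_left: "cinner d (\<lambda>k. \<Sum>i\<in>S. \<gamma> i * a i k) v = (\<Sum>i\<in>S. cnj (\<gamma> i) * cinner d (a i) v)"
  unfolding cinner_def by (simp add: sum_distrib_left sum_distrib_right sum.swap[of _ S] mult.assoc)

lemma cinner_cnj: "cinner d v u = cnj (cinner d u v)"
  unfolding cinner_def by (simp add: mult.commute)

lemma cinner_add_right: "cinner d u (\<lambda>k. v k + w k) = cinner d u v + cinner d u w"
  unfolding cinner_def by (simp add: distrib_left sum.distrib)

lemma cinner_add_left: "cinner d (\<lambda>k. v k + w k) u = cinner d v u + cinner d w u"
  unfolding cinner_def by (simp add: distrib_right sum.distrib)

lemma cinner_self: "cinner d u u = of_real (\<Sum>k<d. (cmod (u k))\<^sup>2)"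
  unfolding cinner_def of_real_sum complex_norm_square by (simp add: mult.commute)

lemma cinner_CS: "cmod (cinner d u v) \<le> sqrt (\<Sum>k<d. (cmod (u k))\<^sup>2) * sqrt (\<Sum>k<d. (cmod (v k))\<^sup>2)"
proof -
  have "cmod (cinner d u v) \<le> (\<Sum>k<d. cmod (cnj (u k) * v k))"
    unfolding cinner_def by (rule norm_sum)
  also have "\<dots> = (\<Sum>k<d. \<bar>cmod (u k)\<bar> * \<bar>cmod (v k)\<bar>)" by (simp add: norm_mult)
  also have "\<dots> \<le> L2_set (\<lambda>k. cmod (u k)) {..<d} * L2_set (\<lambda>k. cmod (v k)) {..<d}"
    by (rule L2_set_mult_ineq)
  finally show ?thesis by (simp add: L2_set_def)
qed

lemma unitary_pres:
  assumes "unitary_mat d U"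
  shows "(\<Sum>i<d. (cmod (\<Sum>j<d. U i j * x j))\<^sup>2) = (\<Sum>j<d. (cmod (x j))\<^sup>2)"
proof -
  have col: "(\<Sum>i<d. cnj (U i k) * U i j) = (if k = j then 1 else 0)" if "j < d" "k < d" for j k
    using assms that unfolding unitary_mat_def by blast
  let ?F = "\<lambda>i j k. U i j * x j * (cnj (U i k) * cnj (x k))"
  have "complex_of_real (\<Sum>i<d. (cmod (\<Sum>j<d. U i j * x j))\<^sup>2) = (\<Sum>i<d. \<Sum>j<d. \<Sum>k<d. ?F i j k)"
    unfolding of_real_sum complex_norm_square cnj_sum sum_product by (simp add: mult_ac)
  also have "\<dots> = (\<Sum>j<d. \<Sum>i<d. \<Sum>k<d. ?F i j k)" by (rule sum.swap)
  also have "\<dots> = (\<Sum>j<d. \<Sum>k<d. \<Sum>i<d. ?F i j k)" by (rule sum.cong[OF refl], rule sum.swap)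
  also have "\<dots> = (\<Sum>j<d. \<Sum>k<d. x j * cnj (x k) * (\<Sum>i<d. cnj (U i k) * U i j))"
    by (simp add: sum_distrib_left mult_ac)
  also have "\<dots> = (\<Sum>j<d. \<Sum>k<d. x j * cnj (x k) * (if k = j then 1 else 0))"
    by (rule sum.cong[OF refl], rule sum.cong[OF refl]) (simp add: col)
  also have "\<dots> = (\<Sum>j<d. x j * cnj (x j))"
    by (rule sum.cong[OF refl]) (simp add: if_distrib[of "\<lambda>t. _ * t"] cong: if_cong)
  also have "\<dots> = complex_of_real (\<Sum>j<d. (cmod (x j))\<^sup>2)"
    unfolding of_real_sum complex_norm_square ..
  finally show ?thesis by (simp only: of_real_eq_iff)
qed

lemma sub_bound:
  assumes "unitary_mat d U" "R \<subseteq> {..<d}" "C \<subseteq> {..<d}"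
  shows "(\<Sum>i\<in>R. (cmod (\<Sum>j\<in>C. U i j * x j))\<^sup>2) \<le> (\<Sum>j\<in>C. (cmod (x j))\<^sup>2)"
proof -
  define x' where "x' = (\<lambda>j. if j \<in> C then x j else 0)"
  have e1: "(\<Sum>j<d. U i j * x' j) = (\<Sum>j\<in>C. U i j * x j)" for i
  proof -
    have "(\<Sum>j<d. U i j * x' j) = (\<Sum>j<d. if j \<in> C then U i j * x j else 0)"
      by (rule sum.cong) (auto simp: x'_def)
    also have "\<dots> = (\<Sum>j\<in>{..<d} \<inter> C. U i j * x j)" by (simp add: sum.inter_restrict)
    also have "{..<d} \<inter> C = C" using assms(3) by auto
    finally show ?thesis .
  qed
  have e2: "(\<Sum>j<d. (cmod (x' j))\<^sup>2) = (\<Sum>j\<in>C. (cmod (x j))\<^sup>2)"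
  proof -
    have "(\<Sum>j<d. (cmod (x' j))\<^sup>2) = (\<Sum>j<d. if j \<in> C then (cmod (x j))\<^sup>2 else 0)"
      by (rule sum.cong) (auto simp: x'_def)
    also have "\<dots> = (\<Sum>j\<in>{..<d} \<inter> C. (cmod (x j))\<^sup>2)" by (simp add: sum.inter_restrict)
    also have "{..<d} \<inter> C = C" using assms(3) by auto
    finally show ?thesis .
  qed
  have "(\<Sum>i\<in>R. (cmod (\<Sum>j\<in>C. U i j * x j))\<^sup>2) \<le> (\<Sum>i<d. (cmod (\<Sum>j\<in>C. U i j * x j))\<^sup>2)"
    by (rule sum_mono2) (use assms(2) in auto)
  also have "\<dots> = (\<Sum>i<d. (cmod (\<Sum>j<d. U i j * x' j))\<^sup>2)" by (simp add: e1)
  also have "\<dots> = (\<Sum>j<d. (cmod (x' j))\<^sup>2)" by (rule unitary_pres[OF assms(1)])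
  finally show ?thesis by (simp add: e2)
qed

definition sn_set :: "(nat \<Rightarrow> nat \<Rightarrow> complex) \<Rightarrow> nat set \<Rightarrow> nat set \<Rightarrow> real set" where
  "sn_set U R C = {sqrt (\<Sum>i\<in>R. (cmod (\<Sum>j\<in>C. U i j * x j))\<^sup>2) | x.
            (\<Sum>j\<in>C. (cmod (x j))\<^sup>2) \<le> 1}"

lemma sn_eq: "submatrix_norm U R C = Sup (sn_set U R C)"
  unfolding submatrix_norm_def sn_set_def ..

lemma sn_set_ne: "sn_set U R C \<noteq> {}"
proof -
  have "sqrt (\<Sum>i\<in>R. (cmod (\<Sum>j\<in>C. U i j * (\<lambda>_. 0) j))\<^sup>2) \<in> sn_set U R C"
    unfolding sn_set_def by (rule CollectI, rule exI[of _ "\<lambda>_. 0"]) simp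
  thus ?thesis by blast
qed

lemma sn_set_le1:
  assumes "unitary_mat d U" "R \<subseteq> {..<d}" "C \<subseteq> {..<d}" "t \<in> sn_set U R C"
  shows "t \<le> 1"
proof -
  obtain x where t: "t = sqrt (\<Sum>i\<in>R. (cmod (\<Sum>j\<in>C. U i j * x j))\<^sup>2)"
    and x: "(\<Sum>j\<in>C. (cmod (x j))\<^sup>2) \<le> 1" using assms(4) unfolding sn_set_def by blast
  have "(\<Sum>i\<in>R. (cmod (\<Sum>j\<in>C. U i j * x j))\<^sup>2) \<le> 1"
    using sub_bound[OF assms(1-3), of x] x by linarith
  thus ?thesis unfolding t by simp
qed

lemma sn_bdd: "unitary_mat d U \<Longrightarrow> R \<subseteq> {..<d} \<Longrightarrow> C \<subseteq> {..<d} \<Longrightarrow> bdd_above (sn_set U R C)"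
  using sn_set_le1 by (meson bdd_above_def)

lemma sn_upper: "unitary_mat d U \<Longrightarrow> R \<subseteq> {..<d} \<Longrightarrow> C \<subseteq> {..<d} \<Longrightarrow> t \<in> sn_set U R C \<Longrightarrow> t \<le> submatrix_norm U R C"
  unfolding sn_eq by (rule cSup_upper) (auto intro: sn_bdd)

lemma sn_le1: "unitary_mat d U \<Longrightarrow> R \<subseteq> {..<d} \<Longrightarrow> C \<subseteq> {..<d} \<Longrightarrow> submatrix_norm U R C \<le> 1"
  unfolding sn_eq by (rule cSup_least[OF sn_set_ne]) (rule sn_set_le1)

lemma sn_ge0: "unitary_mat d U \<Longrightarrow> R \<subseteq> {..<d} \<Longrightarrow> C \<subseteq> {..<d} \<Longrightarrow> 0 \<le> submatrix_norm U R C"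
proof -
  assume a: "unitary_mat d U" "R \<subseteq> {..<d}" "C \<subseteq> {..<d}"
  obtain t where t: "t \<in> sn_set U R C" using sn_set_ne by blast
  have "0 \<le> t" using t unfolding sn_set_def by (auto intro!: sum_nonneg)
  also have "t \<le> submatrix_norm U R C" by (rule sn_upper[OF a t])
  finally show ?thesis .
qed

lemma sum_restrict_sub:
  fixes f x :: "nat \<Rightarrow> complex"
  assumes "C \<subseteq> C'" "finite C'"
  shows "(\<Sum>j\<in>C'. f j * (if j \<in> C then x j else 0)) = (\<Sum>j\<in>C. f j * x j)"
proof -
  have "(\<Sum>j\<in>C'. f j * (if j \<in> C then x j else 0)) = (\<Sum>j\<in>C'. if j \<in> C then f j * x j else 0)"
    by (rule sum.cong) auto
  also have "\<dots> = (\<Sum>j\<in>C' \<inter> C. f j * x j)" using assms(2) by (simp add: sum.inter_restrict)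
  also have "C' \<inter> C = C" using assms(1) by auto
  finally show ?thesis .
qed

lemma sum_restrict_sub2:
  assumes "C \<subseteq> C'" "finite C'"
  shows "(\<Sum>j\<in>C'. (cmod (if j \<in> C then x j else 0))\<^sup>2) = (\<Sum>j\<in>C. (cmod (x j))\<^sup>2)"
proof -
  have "(\<Sum>j\<in>C'. (cmod (if j \<in> C then x j else 0))\<^sup>2) = (\<Sum>j\<in>C'. if j \<in> C then (cmod (x j))\<^sup>2 else 0)"
    by (rule sum.cong) auto
  also have "\<dots> = (\<Sum>j\<in>C' \<inter> C. (cmod (x j))\<^sup>2)" using assms(2) by (simp add: sum.inter_restrict)
  also have "C' \<inter> C = C" using assms(1) by auto
  finally show ?thesis .
qed

lemma sn_mono_col:
  assumes "unitary_mat d U" "R \<subseteq> {..<d}" "C \<subseteq> C'" "C' \<subseteq> {..<d}"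
  shows "submatrix_norm U R C \<le> submatrix_norm U R C'"
  unfolding sn_eq
proof (rule cSup_subset_mono[OF sn_set_ne sn_bdd[OF assms(1,2,4)]])
  have fin: "finite C'" using assms(4) finite_subset by blast
  show "sn_set U R C \<subseteq> sn_set U R C'"
  proof
    fix t assume "t \<in> sn_set U R C"
    then obtain x where t: "t = sqrt (\<Sum>i\<in>R. (cmod (\<Sum>j\<in>C. U i j * x j))\<^sup>2)"
      and x: "(\<Sum>j\<in>C. (cmod (x j))\<^sup>2) \<le> 1" unfolding sn_set_def by blast
    define x' where "x' = (\<lambda>j. if j \<in> C then x j else 0)"
    have "t = sqrt (\<Sum>i\<in>R. (cmod (\<Sum>j\<in>C'. U i j * x' j))\<^sup>2)"
      unfolding t x'_def sum_restrict_sub[OF assms(3) fin] ..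
    moreover have "(\<Sum>j\<in>C'. (cmod (x' j))\<^sup>2) \<le> 1"
      unfolding x'_def sum_restrict_sub2[OF assms(3) fin] by (rule x)
    ultimately show "t \<in> sn_set U R C'" unfolding sn_set_def by blast
  qed
qed

lemma sn_scale:
  assumes "unitary_mat d U" "R \<subseteq> {..<d}" "C \<subseteq> {..<d}"
  shows "sqrt (\<Sum>i\<in>R. (cmod (\<Sum>j\<in>C. U i j * \<beta> j))\<^sup>2) \<le> submatrix_norm U R C * sqrt (\<Sum>j\<in>C. (cmod (\<beta> j))\<^sup>2)"
proof -
  define N where "N = (\<Sum>j\<in>C. (cmod (\<beta> j))\<^sup>2)"
  have finC: "finite C" using assms(3) finite_subset by blast
  have N0: "0 \<le> N" unfolding N_def by (auto intro!: sum_nonneg)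
  have c0: "0 \<le> submatrix_norm U R C" by (rule sn_ge0[OF assms])
  show ?thesis
  proof (cases "N = 0")
    case True
    have "\<forall>j\<in>C. (cmod (\<beta> j))\<^sup>2 = 0" using True finC unfolding N_def
      by (subst sum_nonneg_eq_0_iff[symmetric]) auto
    hence "\<forall>j\<in>C. \<beta> j = 0" by simp
    hence "(\<Sum>j\<in>C. U i j * \<beta> j) = 0" for i by simp
    thus ?thesis using c0 N0 by (simp add: N_def[symmetric])
  next
    case False
    hence Npos: "0 < N" using N0 by simp
    define s where "s = sqrt N"
    have spos: "0 < s" using Npos by (simp add: s_def)
    have s2: "s\<^sup>2 = N" using N0 by (simp add: s_def)
    define x where "x = (\<lambda>j. \<beta> j / complex_of_real s)"
    have "(\<Sum>j\<in>C. (cmod (x j))\<^sup>2) = (\<Sum>j\<in>C. (cmod (\<beta> j))\<^sup>2 / s\<^sup>2)"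
      using spos by (simp add: x_def norm_divide power_divide)
    also have "\<dots> = N / s\<^sup>2" by (simp add: N_def sum_divide_distrib)
    also have "\<dots> = 1" using s2 Npos by simp
    finally have x1: "(\<Sum>j\<in>C. (cmod (x j))\<^sup>2) \<le> 1" by simp
    have hx: "(\<Sum>j\<in>C. U i j * x j) = (\<Sum>j\<in>C. U i j * \<beta> j) / complex_of_real s" for i
      by (simp add: x_def sum_divide_distrib)
    have e: "(cmod (\<Sum>j\<in>C. U i j * x j))\<^sup>2 = (cmod (\<Sum>j\<in>C. U i j * \<beta> j))\<^sup>2 / s\<^sup>2" for i
      unfolding hx using spos by (simp add: norm_divide power_divide)
    have "(\<Sum>i\<in>R. (cmod (\<Sum>j\<in>C. U i j * x j))\<^sup>2) = (\<Sum>i\<in>R. (cmod (\<Sum>j\<in>C. U i j * \<beta> j))\<^sup>2) / s\<^sup>2"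
      unfolding e by (rule sum_divide_distrib[symmetric])
    hence "sqrt (\<Sum>i\<in>R. (cmod (\<Sum>j\<in>C. U i j * x j))\<^sup>2) = sqrt (\<Sum>i\<in>R. (cmod (\<Sum>j\<in>C. U i j * \<beta> j))\<^sup>2) / s"
      using spos by (simp add: real_sqrt_divide)
    moreover have "sqrt (\<Sum>i\<in>R. (cmod (\<Sum>j\<in>C. U i j * x j))\<^sup>2) \<le> submatrix_norm U R C"
      by (rule sn_upper[OF assms]) (use x1 in \<open>auto simp: sn_set_def\<close>)
    ultimately have "sqrt (\<Sum>i\<in>R. (cmod (\<Sum>j\<in>C. U i j * \<beta> j))\<^sup>2) / s \<le> submatrix_norm U R C" by simp
    hence "sqrt (\<Sum>i\<in>R. (cmod (\<Sum>j\<in>C. U i j * \<beta> j))\<^sup>2) \<le> submatrix_norm U R C * s"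
      using spos by (simp add: divide_le_eq)
    thus ?thesis by (simp add: s_def N_def)
  qed
qed

lemma am_gm_sqrt: "0 \<le> P \<Longrightarrow> 0 \<le> Q \<Longrightarrow> 2 * (sqrt P * sqrt Q) \<le> P + Q"
proof -
  assume "0 \<le> P" "0 \<le> Q"
  have "0 \<le> (sqrt P - sqrt Q)\<^sup>2" by simp
  also have "\<dots> = P + Q - 2 * (sqrt P * sqrt Q)" using \<open>0 \<le> P\<close> \<open>0 \<le> Q\<close>
    by (simp add: power2_eq_square algebra_simps)
  finally show ?thesis by simp
qed

lemma expand_self:
  assumes "orthonormal_basis d a" "R \<subseteq> {..<d}" and that: "i \<in> R"
  shows "cinner d (a i) (\<lambda>k. \<Sum>i'\<in>R. \<alpha> i' * a i' k) = \<alpha> i"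
proof -
  have finR: "finite R" using assms(2) finite_subset by blast
  have "cinner d (a i) (\<lambda>k. \<Sum>i'\<in>R. \<alpha> i' * a i' k) = (\<Sum>i'\<in>R. \<alpha> i' * cinner d (a i) (a i'))"
    by (rule cinner_lin_right)
  also have "\<dots> = (\<Sum>i'\<in>R. if i' = i then \<alpha> i' else 0)"
  proof (rule sum.cong[OF refl])
    fix i' assume "i' \<in> R"
    hence "i' < d" "i < d" using assms that by auto
    thus "\<alpha> i' * cinner d (a i) (a i') = (if i' = i then \<alpha> i' else 0)"
      using assms(1) unfolding orthonormal_basis_def by auto
  qed
  also have "\<dots> = \<alpha> i" using finR that by simp
  finally show ?thesis .
qed

lemma expand_norm:
  assumes "orthonormal_basis d a" "R \<subseteq> {..<d}"
  shows "cinner d (\<lambda>k. \<Sum>i\<in>R. \<alpha> i * a i k) (\<lambda>k. \<Sum>i\<in>R. \<alpha> i * a i k) = of_real (\<Sum>i\<in>R. (cmod (\<alpha> i))\<^sup>2)"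
proof -
  have "cinner d (\<lambda>k. \<Sum>i\<in>R. \<alpha> i * a i k) (\<lambda>k. \<Sum>i\<in>R. \<alpha> i * a i k) =
     (\<Sum>i\<in>R. cnj (\<alpha> i) * cinner d (a i) (\<lambda>k. \<Sum>i\<in>R. \<alpha> i * a i k))" by (rule cinner_lin_left)
  also have "\<dots> = (\<Sum>i\<in>R. cnj (\<alpha> i) * \<alpha> i)"
    by (rule sum.cong[OF refl]) (simp add: expand_self[OF assms(1,2)])
  also have "\<dots> = of_real (\<Sum>i\<in>R. (cmod (\<alpha> i))\<^sup>2)"
    unfolding of_real_sum complex_norm_square by (simp add: mult.commute)
  finally show ?thesis .
qed

lemma expand_psi:
  "cinner d \<psi> (\<lambda>k. \<Sum>i\<in>R. cinner d (a i) \<psi> * a i k) = of_real (\<Sum>i\<in>R. (cmod (cinner d (a i) \<psi>))\<^sup>2)"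
proof -
  have "cinner d \<psi> (\<lambda>k. \<Sum>i\<in>R. cinner d (a i) \<psi> * a i k) = (\<Sum>i\<in>R. cinner d (a i) \<psi> * cinner d \<psi> (a i))"
    by (rule cinner_lin_right)
  also have "\<dots> = (\<Sum>i\<in>R. cinner d (a i) \<psi> * cnj (cinner d (a i) \<psi>))"
    by (rule sum.cong[OF refl]) (simp add: cinner_cnj[of d \<psi>])
  also have "\<dots> = of_real (\<Sum>i\<in>R. (cmod (cinner d (a i) \<psi>))\<^sup>2)"
    unfolding of_real_sum complex_norm_square ..
  finally show ?thesis .
qed

lemma pure_LP:
  assumes U: "unitary_mat d U" and oa: "orthonormal_basis d a" and ob: "orthonormal_basis d b"
    and Uab: "\<forall>i<d. \<forall>j<d. U i j = cinner d (a i) (b j)"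
    and R: "R \<subseteq> {..<d}" and C: "C \<subseteq> {..<d}"
  shows "(\<Sum>i\<in>R. (cmod (cinner d (a i) \<psi>))\<^sup>2) + (\<Sum>j\<in>C. (cmod (cinner d (b j) \<psi>))\<^sup>2)
     \<le> (1 + submatrix_norm U R C) * (\<Sum>k<d. (cmod (\<psi> k))\<^sup>2)"
proof -
  define \<alpha> where "\<alpha> = (\<lambda>i. cinner d (a i) \<psi>)"
  define \<beta> where "\<beta> = (\<lambda>j. cinner d (b j) \<psi>)"
  define x where "x = (\<lambda>k. \<Sum>i\<in>R. \<alpha> i * a i k)"
  define y where "y = (\<lambda>k. \<Sum>j\<in>C. \<beta> j * b j k)"
  define P where "P = (\<Sum>i\<in>R. (cmod (\<alpha> i))\<^sup>2)"
  define Q where "Q = (\<Sum>j\<in>C. (cmod (\<beta> j))\<^sup>2)"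
  define N where "N = (\<Sum>k<d. (cmod (\<psi> k))\<^sup>2)"
  define c where "c = submatrix_norm U R C"
  have P0: "0 \<le> P" unfolding P_def by (auto intro!: sum_nonneg)
  have Q0: "0 \<le> Q" unfolding Q_def by (auto intro!: sum_nonneg)
  have N0: "0 \<le> N" unfolding N_def by (auto intro!: sum_nonneg)
  have c0: "0 \<le> c" unfolding c_def by (rule sn_ge0[OF U R C])
  have xx: "cinner d x x = of_real P" unfolding x_def P_def by (rule expand_norm[OF oa R])
  have yy: "cinner d y y = of_real Q" unfolding y_def Q_def by (rule expand_norm[OF ob C])
  have px: "cinner d \<psi> x = of_real P" unfolding x_def P_def \<alpha>_def by (rule expand_psi)
  have py: "cinner d \<psi> y = of_real Q" unfolding y_def Q_def \<beta>_def by (rule expand_psi)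
  define G where "G = (\<lambda>i. \<Sum>j\<in>C. U i j * \<beta> j)"
  have xy: "cinner d x y = (\<Sum>i\<in>R. cnj (\<alpha> i) * G i)"
  proof -
    have "cinner d x y = (\<Sum>i\<in>R. cnj (\<alpha> i) * cinner d (a i) y)" unfolding x_def by (rule cinner_lin_left)
    also have "\<dots> = (\<Sum>i\<in>R. cnj (\<alpha> i) * G i)"
    proof (rule sum.cong[OF refl])
      fix i assume i: "i \<in> R"
      have "cinner d (a i) y = (\<Sum>j\<in>C. \<beta> j * cinner d (a i) (b j))" unfolding y_def by (rule cinner_lin_right)
      also have "\<dots> = G i" unfolding G_def
      proof (rule sum.cong[OF refl])
        fix j assume "j \<in> C"
        hence "j < d" "i < d" using i R C by auto
        thus "\<beta> j * cinner d (a i) (b j) = U i j * \<beta> j" using Uab by (auto simp: mult.commute)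
      qed
      finally show "cnj (\<alpha> i) * cinner d (a i) y = cnj (\<alpha> i) * G i" by simp
    qed
    finally show ?thesis .
  qed
  have xyb: "cmod (cinner d x y) \<le> c * sqrt P * sqrt Q"
  proof -
    have "cmod (cinner d x y) \<le> (\<Sum>i\<in>R. cmod (cnj (\<alpha> i) * G i))" unfolding xy by (rule norm_sum)
    also have "\<dots> = (\<Sum>i\<in>R. \<bar>cmod (\<alpha> i)\<bar> * \<bar>cmod (G i)\<bar>)" by (simp add: norm_mult)
    also have "\<dots> \<le> L2_set (\<lambda>i. cmod (\<alpha> i)) R * L2_set (\<lambda>i. cmod (G i)) R" by (rule L2_set_mult_ineq)
    also have "\<dots> = sqrt P * sqrt (\<Sum>i\<in>R. (cmod (G i))\<^sup>2)" by (simp add: L2_set_def P_def)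
    also have "\<dots> \<le> sqrt P * (c * sqrt Q)"
      by (rule mult_left_mono) (use sn_scale[OF U R C, of \<beta>] P0 in \<open>simp_all add: G_def c_def Q_def\<close>)
    finally show ?thesis by (simp add: mult_ac)
  qed
  have pxy: "cinner d \<psi> (\<lambda>k. x k + y k) = of_real (P + Q)"
    by (simp add: cinner_add_right px py)
  define M where "M = (\<Sum>k<d. (cmod (x k + y k))\<^sup>2)"
  have M: "M = P + Q + 2 * Re (cinner d x y)"
  proof -
    have "complex_of_real M = cinner d (\<lambda>k. x k + y k) (\<lambda>k. x k + y k)"
      unfolding M_def by (rule cinner_self[symmetric])
    also have "\<dots> = cinner d x x + cinner d x y + (cinner d y x + cinner d y y)"
      by (simp add: cinner_add_right cinner_add_left)
    also have "cinner d y x = cnj (cinner d x y)" by (rule cinner_cnj)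
    finally have e1: "complex_of_real M = cinner d x x + cinner d x y + (cnj (cinner d x y) + cinner d y y)" .
    have "complex_of_real M = of_real P + of_real Q + (cinner d x y + cnj (cinner d x y))"
      unfolding e1 xx yy by (simp add: algebra_simps)
    also have "cinner d x y + cnj (cinner d x y) = of_real (2 * Re (cinner d x y))" by (rule complex_add_cnj)
    finally have "complex_of_real M = of_real P + of_real Q + of_real (2 * Re (cinner d x y))" .
    thus ?thesis by (simp only: of_real_add[symmetric] of_real_eq_iff)
  qed
  have M0: "0 \<le> M" unfolding M_def by (auto intro!: sum_nonneg)
  have Mb: "M \<le> (1 + c) * (P + Q)"
  proof -
    have "Re (cinner d x y) \<le> cmod (cinner d x y)" by (rule complex_Re_le_cmod)
    hence "M \<le> P + Q + 2 * (c * sqrt P * sqrt Q)" using M xyb by linarith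
    also have "2 * (c * sqrt P * sqrt Q) = c * (2 * (sqrt P * sqrt Q))" by (simp add: mult_ac)
    also have "\<dots> \<le> c * (P + Q)" by (rule mult_left_mono[OF am_gm_sqrt[OF P0 Q0] c0])
    finally show ?thesis by (simp add: algebra_simps)
  qed
  have "P + Q = cmod (cinner d \<psi> (\<lambda>k. x k + y k))" unfolding pxy norm_of_real using P0 Q0 by simp
  also have "\<dots> \<le> sqrt N * sqrt M" unfolding N_def M_def by (rule cinner_CS)
  finally have le1: "P + Q \<le> sqrt N * sqrt M" .
  have "(P + Q)\<^sup>2 \<le> (sqrt N * sqrt M)\<^sup>2" by (rule power_mono[OF le1]) (use P0 Q0 in simp)
  also have "\<dots> = N * M" using N0 M0 by (simp add: power_mult_distrib)
  also have "\<dots> \<le> N * ((1 + c) * (P + Q))" by (rule mult_left_mono[OF Mb N0])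
  finally have sq: "(P + Q) * (P + Q) \<le> (N * (1 + c)) * (P + Q)" by (simp add: power2_eq_square mult_ac)
  have "P + Q \<le> N * (1 + c)"
  proof (cases "P + Q = 0")
    case True thus ?thesis using N0 c0 by simp
  next
    case False
    hence "0 < P + Q" using P0 Q0 by simp
    thus ?thesis using sq by (simp add: mult_le_cancel_right)
  qed
  thus ?thesis by (simp add: P_def Q_def N_def c_def \<alpha>_def \<beta>_def mult.commute)
qed

lemma parseval:
  assumes "orthonormal_basis d a"
  shows "(\<Sum>i<d. (cmod (cinner d (a i) \<psi>))\<^sup>2) = (\<Sum>k<d. (cmod (\<psi> k))\<^sup>2)"
proof -
  let ?F = "\<lambda>i k l. cnj (a i k) * \<psi> k * (a i l * cnj (\<psi> l))"
  have "complex_of_real (\<Sum>i<d. (cmod (cinner d (a i) \<psi>))\<^sup>2) = (\<Sum>i<d. \<Sum>k<d. \<Sum>l<d. ?F i k l)"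
    unfolding of_real_sum complex_norm_square cinner_def cnj_sum sum_product by simp
  also have "\<dots> = (\<Sum>k<d. \<Sum>i<d. \<Sum>l<d. ?F i k l)" by (rule sum.swap)
  also have "\<dots> = (\<Sum>k<d. \<Sum>l<d. \<Sum>i<d. ?F i k l)" by (rule sum.cong[OF refl], rule sum.swap)
  also have "\<dots> = (\<Sum>k<d. \<Sum>l<d. \<psi> k * cnj (\<psi> l) * (\<Sum>i<d. cnj (a i k) * a i l))"
    by (simp add: sum_distrib_left mult_ac)
  also have "\<dots> = (\<Sum>k<d. \<Sum>l<d. \<psi> k * cnj (\<psi> l) * (if l = k then 1 else 0))"
    by (rule sum.cong[OF refl], rule sum.cong[OF refl]) (use ortho_complete[OF assms] in auto)
  also have "\<dots> = (\<Sum>k<d. \<psi> k * cnj (\<psi> k))"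
    by (rule sum.cong[OF refl]) (simp add: if_distrib[of "\<lambda>t. _ * t"] cong: if_cong)
  also have "\<dots> = complex_of_real (\<Sum>k<d. (cmod (\<psi> k))\<^sup>2)"
    unfolding of_real_sum complex_norm_square ..
  finally show ?thesis by (simp only: of_real_eq_iff)
qed

lemma gram_quad:
  assumes "\<forall>k<d. \<forall>l<d. \<rho> k l = (\<Sum>m<d. v m k * cnj (v m l))"
  shows "cinner d u (mat_vec d \<rho> u) = of_real (\<Sum>m<d. (cmod (cinner d u (v m)))\<^sup>2)"
proof -
  let ?F = "\<lambda>k l m. cnj (u k) * (v m k * (cnj (v m l) * u l))"
  have A: "(\<Sum>l<d. \<rho> k l * u l) = (\<Sum>l<d. (\<Sum>m<d. v m k * cnj (v m l)) * u l)" if "k < d" for k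
    by (rule sum.cong[OF refl]) (use assms that in auto)
  have "cinner d u (mat_vec d \<rho> u) = (\<Sum>k<d. cnj (u k) * (\<Sum>l<d. (\<Sum>m<d. v m k * cnj (v m l)) * u l))"
    unfolding cinner_def mat_vec_def by (rule sum.cong[OF refl]) (simp add: A)
  also have "\<dots> = (\<Sum>k<d. \<Sum>l<d. \<Sum>m<d. ?F k l m)"
    by (simp add: sum_distrib_left sum_distrib_right mult.assoc)
  also have "\<dots> = (\<Sum>k<d. \<Sum>m<d. \<Sum>l<d. ?F k l m)" by (rule sum.cong[OF refl], rule sum.swap)
  also have "\<dots> = (\<Sum>m<d. \<Sum>k<d. \<Sum>l<d. ?F k l m)" by (rule sum.swap)
  also have "\<dots> = (\<Sum>m<d. cinner d u (v m) * cnj (cinner d u (v m)))"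
    unfolding cinner_def cnj_sum sum_product by (simp add: mult_ac)
  also have "\<dots> = of_real (\<Sum>m<d. (cmod (cinner d u (v m)))\<^sup>2)"
    unfolding of_real_sum complex_norm_square ..
  finally show ?thesis .
qed

lemma density_gram:
  assumes "density_matrix d \<rho>"
  shows "\<exists>v. (\<forall>k<d. \<forall>l<d. \<rho> k l = (\<Sum>m<d. v m k * cnj (v m l))) \<and> (\<Sum>m<d. \<Sum>k<d. (cmod (v m k))\<^sup>2) = 1"
proof -
  have "psd d \<rho>" using assms unfolding density_matrix_def psd_def cinner_def mat_vec_def by blast
  then obtain v where v: "\<forall>k<d. \<forall>l<d. \<rho> k l = (\<Sum>m<d. v m k * cnj (v m l))" using psd_gram by blast
  have "complex_of_real (\<Sum>m<d. \<Sum>k<d. (cmod (v m k))\<^sup>2) = (\<Sum>k<d. \<Sum>m<d. v m k * cnj (v m k))"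
    unfolding of_real_sum complex_norm_square by (rule sum.swap)
  also have "\<dots> = (\<Sum>k<d. \<rho> k k)" by (rule sum.cong[OF refl]) (use v in auto)
  also have "\<dots> = 1" using assms unfolding density_matrix_def by blast
  finally have "(\<Sum>m<d. \<Sum>k<d. (cmod (v m k))\<^sup>2) = 1"
    by (metis of_real_eq_1_iff)
  thus ?thesis using v by blast
qed

lemma prob_eq:
  assumes "\<forall>k<d. \<forall>l<d. \<rho> k l = (\<Sum>m<d. v m k * cnj (v m l))"
  shows "Re (cinner d u (mat_vec d \<rho> u)) = (\<Sum>m<d. (cmod (cinner d u (v m)))\<^sup>2)"
  unfolding gram_quad[OF assms] by simp

lemma prob_sum:
  assumes "\<forall>k<d. \<forall>l<d. \<rho> k l = (\<Sum>m<d. v m k * cnj (v m l))" "(\<Sum>m<d. \<Sum>k<d. (cmod (v m k))\<^sup>2) = 1"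
    "orthonormal_basis d a"
  shows "(\<Sum>i<d. Re (cinner d (a i) (mat_vec d \<rho> (a i)))) = 1"
proof -
  have "(\<Sum>i<d. Re (cinner d (a i) (mat_vec d \<rho> (a i)))) = (\<Sum>i<d. \<Sum>m<d. (cmod (cinner d (a i) (v m)))\<^sup>2)"
    by (simp add: prob_eq[OF assms(1)])
  also have "\<dots> = (\<Sum>m<d. \<Sum>i<d. (cmod (cinner d (a i) (v m)))\<^sup>2)" by (rule sum.swap)
  also have "\<dots> = (\<Sum>m<d. \<Sum>k<d. (cmod (v m k))\<^sup>2)" by (simp add: parseval[OF assms(3)])
  finally show ?thesis using assms(2) by simp
qed

lemma prob_nonneg:
  assumes "\<forall>k<d. \<forall>l<d. \<rho> k l = (\<Sum>m<d. v m k * cnj (v m l))"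
  shows "0 \<le> Re (cinner d u (mat_vec d \<rho> u))"
  unfolding prob_eq[OF assms] by (auto intro!: sum_nonneg)

lemma mixed_LP:
  assumes U: "unitary_mat d U" and oa: "orthonormal_basis d a" and ob: "orthonormal_basis d b"
    and Uab: "\<forall>i<d. \<forall>j<d. U i j = cinner d (a i) (b j)"
    and R: "R \<subseteq> {..<d}" and C: "C \<subseteq> {..<d}"
    and v: "\<forall>k<d. \<forall>l<d. \<rho> k l = (\<Sum>m<d. v m k * cnj (v m l))" and tr: "(\<Sum>m<d. \<Sum>k<d. (cmod (v m k))\<^sup>2) = 1"
  shows "(\<Sum>i\<in>R. Re (cinner d (a i) (mat_vec d \<rho> (a i)))) + (\<Sum>j\<in>C. Re (cinner d (b j) (mat_vec d \<rho> (b j))))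
     \<le> 1 + submatrix_norm U R C"
proof -
  have "(\<Sum>i\<in>R. Re (cinner d (a i) (mat_vec d \<rho> (a i)))) + (\<Sum>j\<in>C. Re (cinner d (b j) (mat_vec d \<rho> (b j))))
     = (\<Sum>i\<in>R. \<Sum>m<d. (cmod (cinner d (a i) (v m)))\<^sup>2) + (\<Sum>j\<in>C. \<Sum>m<d. (cmod (cinner d (b j) (v m)))\<^sup>2)"
    by (simp add: prob_eq[OF v])
  also have "\<dots> = (\<Sum>m<d. (\<Sum>i\<in>R. (cmod (cinner d (a i) (v m)))\<^sup>2) + (\<Sum>j\<in>C. (cmod (cinner d (b j) (v m)))\<^sup>2))"
    by (simp add: sum.distrib sum.swap[of _ R] sum.swap[of _ C])
  also have "\<dots> \<le> (\<Sum>m<d. (1 + submatrix_norm U R C) * (\<Sum>k<d. (cmod (v m k))\<^sup>2))"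
    by (rule sum_mono) (rule pure_LP[OF U oa ob Uab R C])
  also have "\<dots> = 1 + submatrix_norm U R C" by (simp add: sum_distrib_left[symmetric] tr)
  finally show ?thesis .
qed

definition S_set :: "nat \<Rightarrow> (nat \<Rightarrow> nat \<Rightarrow> complex) \<Rightarrow> nat \<Rightarrow> real set" where
  "S_set d U k = {submatrix_norm U R C | R C.
       R \<subseteq> {..<d} \<and> C \<subseteq> {..<d} \<and> R \<noteq> {} \<and> C \<noteq> {} \<and> card R + card C = k + 1}"

lemma s_coef_eq: "s_coef d U k = Max (S_set d U k)"
  unfolding s_coef_def S_set_def ..

lemma S_finite: "finite (S_set d U k)"
proof (rule finite_subset)
  show "S_set d U k \<subseteq> (\<lambda>(R, C). submatrix_norm U R C) ` (Pow {..<d} \<times> Pow {..<d})"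
    unfolding S_set_def by auto
qed auto

lemma S_ne: assumes "1 \<le> k" "k \<le> d" shows "S_set d U k \<noteq> {}"
proof -
  have c: "{0::nat} \<subseteq> {..<d}" "{..<k} \<subseteq> {..<d}" "{0::nat} \<noteq> {}" "{..<k} \<noteq> {}"
    "card {0::nat} + card {..<k} = k + 1" using assms by (auto simp: lessThan_empty_iff)
  have "submatrix_norm U {0} {..<k} \<in> S_set d U k"
    unfolding S_set_def using c by blast
  thus ?thesis by blast
qed

lemma s_upper:
  assumes "R \<subseteq> {..<d}" "C \<subseteq> {..<d}" "R \<noteq> {}" "C \<noteq> {}" "card R + card C = k + 1"
  shows "submatrix_norm U R C \<le> s_coef d U k"
  unfolding s_coef_eq by (rule Max_ge[OF S_finite]) (use assms in \<open>auto simp: S_set_def\<close>)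

lemma s_attained:
  assumes "1 \<le> k" "k \<le> d"
  shows "\<exists>R C. R \<subseteq> {..<d} \<and> C \<subseteq> {..<d} \<and> R \<noteq> {} \<and> C \<noteq> {} \<and> card R + card C = k + 1
           \<and> s_coef d U k = submatrix_norm U R C"
proof -
  have "s_coef d U k \<in> S_set d U k" unfolding s_coef_eq by (rule Max_in[OF S_finite S_ne[OF assms]])
  thus ?thesis unfolding S_set_def by auto
qed

lemma s_ge0: assumes "unitary_mat d U" "1 \<le> k" "k \<le> d" shows "0 \<le> s_coef d U k"
  using s_attained[OF assms(2,3), of U] sn_ge0[OF assms(1)] by force

lemma s_le1: assumes "unitary_mat d U" "1 \<le> k" "k \<le> d" shows "s_coef d U k \<le> 1"
  using s_attained[OF assms(2,3), of U] sn_le1[OF assms(1)] by force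

lemma s_mono: assumes "unitary_mat d U" "1 \<le> k" "k < d" shows "s_coef d U k \<le> s_coef d U (Suc k)"
proof -
  obtain R C where RC: "R \<subseteq> {..<d}" "C \<subseteq> {..<d}" "R \<noteq> {}" "C \<noteq> {}" "card R + card C = k + 1"
    and s: "s_coef d U k = submatrix_norm U R C" using s_attained[OF assms(2), of d U] assms(3) by auto
  have "C \<noteq> {..<d}"
  proof
    assume "C = {..<d}"
    hence "card C = d" by simp
    moreover have "card R \<ge> 1" using RC(1,3) finite_subset[OF RC(1)] by (simp add: Suc_le_eq card_gt_0_iff)
    ultimately show False using RC(5) assms(3) by simp
  qed
  then obtain j where j: "j < d" "j \<notin> C" using RC(2) by blast
  have fC: "finite C" using finite_subset[OF RC(2)] by simp
  have "s_coef d U k \<le> submatrix_norm U R (insert j C)"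
    unfolding s by (rule sn_mono_col[OF assms(1) RC(1)]) (use j RC(2) in auto)
  also have "\<dots> \<le> s_coef d U (Suc k)"
    by (rule s_upper) (use RC j fC in auto)
  finally show ?thesis .
qed

lemma s_top: assumes "unitary_mat d U" "1 \<le> d" shows "s_coef d U d = 1"
proof (rule antisym)
  show "s_coef d U d \<le> 1" by (rule s_le1[OF assms(1,2)]) simp
  define x where "x = (\<lambda>j::nat. if j = 0 then (1::complex) else 0)"
  have col: "(\<Sum>i<d. cnj (U i 0) * U i 0) = 1" using assms unfolding unitary_mat_def by auto
  have "(\<Sum>i<d. (cmod (U i 0))\<^sup>2) = 1"
  proof -
    have "complex_of_real (\<Sum>i<d. (cmod (U i 0))\<^sup>2) = (\<Sum>i<d. cnj (U i 0) * U i 0)"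
      unfolding of_real_sum complex_norm_square by (simp add: mult.commute)
    thus ?thesis using col by (metis of_real_eq_1_iff)
  qed
  hence "1 \<in> sn_set U {..<d} {0}" unfolding sn_set_def
    by (intro CollectI exI[of _ x]) (simp add: x_def)
  moreover have sub0: "{0::nat} \<subseteq> {..<d}" using assms by auto
  ultimately have "1 \<le> submatrix_norm U {..<d} {0}" using sn_upper[OF assms(1) order_refl] by blast
  also have "\<dots> \<le> s_coef d U d" by (rule s_upper) (use assms in \<open>auto simp: lessThan_empty_iff\<close>)
  finally show "1 \<le> s_coef d U d" .
qed

lemma abel:
  fixes g dd :: "nat \<Rightarrow> real"
  shows "(\<And>i. Suc i < n \<Longrightarrow> g i \<le> g (Suc i)) \<Longrightarrow> (\<And>m. m \<le> n \<Longrightarrow> 0 \<le> (\<Sum>i<m. dd i)) \<Longrightarrow>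
    (\<Sum>i<n. g i * dd i) \<le> g (n - 1) * (\<Sum>i<n. dd i)"
proof (induction n)
  case 0 thus ?case by simp
next
  case (Suc n)
  have IH: "(\<Sum>i<n. g i * dd i) \<le> g (n - 1) * (\<Sum>i<n. dd i)"
    using Suc.IH Suc.prems by auto
  have D: "0 \<le> (\<Sum>i<n. dd i)" using Suc.prems(2)[of n] by simp
  have "g (n - 1) * (\<Sum>i<n. dd i) \<le> g n * (\<Sum>i<n. dd i)"
  proof (cases n)
    case 0 thus ?thesis by simp
  next
    case (Suc n')
    hence "g (n - 1) \<le> g n" using Suc.prems(1)[of n'] by simp
    thus ?thesis using D by (rule mult_right_mono)
  qed
  hence "(\<Sum>i<Suc n. g i * dd i) \<le> g n * (\<Sum>i<n. dd i) + g n * dd n" using IH by simp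
  thus ?case by (simp add: distrib_left)
qed

lemma karamata_sorted:
  fixes x y :: "nat \<Rightarrow> real" and \<phi> g :: "real \<Rightarrow> real"
  assumes xdec: "\<And>i j. i \<le> j \<Longrightarrow> j < n \<Longrightarrow> x j \<le> x i"
    and x0: "\<And>i. i < n \<Longrightarrow> 0 \<le> x i" and y0: "\<And>i. i < n \<Longrightarrow> 0 \<le> y i"
    and pre: "\<And>m. m \<le> n \<Longrightarrow> (\<Sum>i<m. x i) \<le> (\<Sum>i<m. y i)"
    and tot: "(\<Sum>i<n. x i) = (\<Sum>i<n. y i)"
    and sg: "\<And>u v. 0 < u \<Longrightarrow> 0 \<le> v \<Longrightarrow> \<phi> v \<le> \<phi> u + g u * (v - u)"
    and gmono: "\<And>u v. 0 < u \<Longrightarrow> u \<le> v \<Longrightarrow> g v \<le> g u"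
  shows "(\<Sum>i<n. \<phi> (y i)) \<le> (\<Sum>i<n. \<phi> (x i))"
proof -
  have yz: "y i = 0" if i: "i < n" "x i = 0" for i
  proof -
    have xz: "x j = 0" if "i \<le> j" "j < n" for j using xdec[OF that] x0[OF that(2)] i(2) by simp
    have split: "{..<n} = {..<i} \<union> {i..<n}" using i by auto
    have "(\<Sum>j<n. x j) = (\<Sum>j<i. x j) + (\<Sum>j\<in>{i..<n}. x j)"
      unfolding split by (rule sum.union_disjoint) auto
    also have "(\<Sum>j\<in>{i..<n}. x j) = 0" using xz by simp
    finally have "(\<Sum>j<n. y j) \<le> (\<Sum>j<i. y j)" using tot pre[of i] i by simp
    moreover have "(\<Sum>j<Suc i. y j) \<le> (\<Sum>j<n. y j)"
      by (rule sum_mono2) (use i y0 in auto)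
    ultimately have "y i \<le> 0" by simp
    thus ?thesis using y0[OF i(1)] by simp
  qed
  define L where "L = Max (insert 0 ((\<lambda>i. g (x i)) ` {i. i < n \<and> 0 < x i}))"
  have Lge: "g (x i) \<le> L" if "i < n" "0 < x i" for i
    unfolding L_def by (rule Max_ge) (use that in auto)
  define G where "G = (\<lambda>i. if 0 < x i then g (x i) else L)"
  define dd where "dd = (\<lambda>i. y i - x i)"
  have Gmono: "G i \<le> G (Suc i)" if "Suc i < n" for i
  proof (cases "0 < x (Suc i)")
    case True
    have "x (Suc i) \<le> x i" using xdec[of i "Suc i"] that by simp
    thus ?thesis using True gmono[OF True] by (simp add: G_def)
  next
    case False
    thus ?thesis using Lge[of i] that by (auto simp: G_def)
  qed
  have Dnn: "0 \<le> (\<Sum>i<m. dd i)" if "m \<le> n" for m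
    using pre[OF that] by (simp add: dd_def sum_subtractf)
  have tm: "\<phi> (y i) - \<phi> (x i) \<le> G i * dd i" if "i < n" for i
  proof (cases "0 < x i")
    case True thus ?thesis using sg[OF True y0[OF that]] by (simp add: G_def dd_def)
  next
    case False
    hence "x i = 0" using x0[OF that] by simp
    thus ?thesis using yz[OF that] by (simp add: dd_def)
  qed
  have "(\<Sum>i<n. \<phi> (y i)) - (\<Sum>i<n. \<phi> (x i)) = (\<Sum>i<n. \<phi> (y i) - \<phi> (x i))" by (simp add: sum_subtractf)
  also have "\<dots> \<le> (\<Sum>i<n. G i * dd i)" by (rule sum_mono) (use tm in auto)
  also have "\<dots> \<le> G (n - 1) * (\<Sum>i<n. dd i)" by (rule abel) (use Gmono Dnn in auto)
  also have "(\<Sum>i<n. dd i) = 0" using tot by (simp add: dd_def sum_subtractf)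
  finally show ?thesis by simp
qed

lemma karamata:
  fixes x y :: "nat \<Rightarrow> real" and \<phi> g :: "real \<Rightarrow> real"
  assumes x0: "\<And>i. i < n \<Longrightarrow> 0 \<le> x i" and y0: "\<And>i. i < n \<Longrightarrow> 0 \<le> y i"
    and pre: "\<And>S. S \<subseteq> {..<n} \<Longrightarrow> (\<Sum>i\<in>S. x i) \<le> (\<Sum>i<card S. y i)"
    and tot: "(\<Sum>i<n. x i) = (\<Sum>i<n. y i)"
    and sg: "\<And>u v. 0 < u \<Longrightarrow> 0 \<le> v \<Longrightarrow> \<phi> v \<le> \<phi> u + g u * (v - u)"
    and gmono: "\<And>u v. 0 < u \<Longrightarrow> u \<le> v \<Longrightarrow> g v \<le> g u"
  shows "(\<Sum>i<n. \<phi> (y i)) \<le> (\<Sum>i<n. \<phi> (x i))"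
proof -
  define xs where "xs = sort_key (\<lambda>i. - x i) [0..<n]"
  have len: "length xs = n" by (simp add: xs_def)
  have dist: "distinct xs" by (simp add: xs_def)
  have set: "set xs = {..<n}" by (auto simp: xs_def)
  define \<sigma> where "\<sigma> = (\<lambda>k. xs ! k)"
  have bij: "bij_betw \<sigma> {..<n} {..<n}" unfolding \<sigma>_def
    by (rule bij_betw_nth[OF dist]) (simp_all add: len set)
  have inj: "inj_on \<sigma> {..<n}" using bij by (rule bij_betw_imp_inj_on)
  have srt: "sorted (map (\<lambda>i. - x i) xs)" by (simp add: xs_def)
  have xdec: "x (\<sigma> j) \<le> x (\<sigma> i)" if "i \<le> j" "j < n" for i j
  proof -
    have "map (\<lambda>i. - x i) xs ! i \<le> map (\<lambda>i. - x i) xs ! j"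
      by (rule sorted_nth_mono[OF srt that(1)]) (use that len in simp)
    thus ?thesis using that len by (simp add: \<sigma>_def)
  qed
  have sig_lt: "\<sigma> k < n" if "k < n" for k using bij that by (auto dest: bij_betw_apply)
  have reidx: "(\<Sum>k<n. f (\<sigma> k)) = (\<Sum>i<n. f i)" for f :: "nat \<Rightarrow> real"
    using sum.reindex_bij_betw[OF bij, of f] by simp
  show ?thesis
  proof -
    have "(\<Sum>i<n. \<phi> (y i)) \<le> (\<Sum>k<n. \<phi> (x (\<sigma> k)))"
    proof (rule karamata_sorted[of n "\<lambda>k. x (\<sigma> k)" y \<phi> g])
      show "\<And>i j. i \<le> j \<Longrightarrow> j < n \<Longrightarrow> x (\<sigma> j) \<le> x (\<sigma> i)" by (rule xdec)
      show "\<And>i. i < n \<Longrightarrow> 0 \<le> x (\<sigma> i)" using x0 sig_lt by blast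
      show "\<And>i. i < n \<Longrightarrow> 0 \<le> y i" by (rule y0)
      show "(\<Sum>i<n. x (\<sigma> i)) = (\<Sum>i<n. y i)" using tot reidx[of x] by simp
      show "\<And>u v. 0 < u \<Longrightarrow> 0 \<le> v \<Longrightarrow> \<phi> v \<le> \<phi> u + g u * (v - u)" by (rule sg)
      show "\<And>u v. 0 < u \<Longrightarrow> u \<le> v \<Longrightarrow> g v \<le> g u" by (rule gmono)
      fix m assume m: "m \<le> n"
      have injm: "inj_on \<sigma> {..<m}" by (rule inj_on_subset[OF inj]) (use m in auto)
      have "(\<Sum>i<m. x (\<sigma> i)) = (\<Sum>i\<in>\<sigma> ` {..<m}. x i)" by (simp add: sum.reindex[OF injm])
      also have "\<dots> \<le> (\<Sum>i<card (\<sigma> ` {..<m}). y i)" by (rule pre) (use sig_lt m in auto)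
      also have "card (\<sigma> ` {..<m}) = m" using card_image[OF injm] by simp
      finally show "(\<Sum>i<m. x (\<sigma> i)) \<le> (\<Sum>i<m. y i)" .
    qed
    also have "\<dots> = (\<Sum>i<n. \<phi> (x i))" by (rule reidx)
    finally show ?thesis .
  qed
qed

lemma bern_powr:
  fixes \<alpha> z :: real
  assumes "0 < \<alpha>" "\<alpha> \<le> 1" "0 < z"
  shows "z powr \<alpha> \<le> 1 + \<alpha> * (z - 1)"
proof -
  define h where "h = (\<lambda>x::real. 1 + \<alpha> * (x - 1) - x powr \<alpha>)"
  have D: "(h has_real_derivative (\<alpha> - \<alpha> * x powr (\<alpha> - 1))) (at x)" if "0 < x" for x
    unfolding h_def using that
    by (auto intro!: derivative_eq_intros has_real_derivative_powr)
  have h1: "h 1 = 0" by (simp add: h_def)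
  have "0 \<le> h z"
  proof (cases "1 \<le> z")
    case True
    have "h 1 \<le> h z"
    proof (rule deriv_nonneg_imp_mono[of 1 z h "\<lambda>x. \<alpha> - \<alpha> * x powr (\<alpha> - 1)"])
      fix x assume x: "x \<in> {1..z}"
      thus "(h has_real_derivative (\<alpha> - \<alpha> * x powr (\<alpha> - 1))) (at x)" by (intro D) auto
      have "x powr (\<alpha> - 1) \<le> 1 powr (\<alpha> - 1)" by (rule powr_mono2') (use x assms in auto)
      thus "0 \<le> \<alpha> - \<alpha> * x powr (\<alpha> - 1)" using assms by (simp add: mult_left_le)
    qed (use True in auto)
    thus ?thesis using h1 by simp
  next
    case False
    have "(\<lambda>x. - h x) z \<le> (\<lambda>x. - h x) 1"
    proof (rule deriv_nonneg_imp_mono[of z 1 "\<lambda>x. - h x" "\<lambda>x. - (\<alpha> - \<alpha> * x powr (\<alpha> - 1))"])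
      fix x assume x: "x \<in> {z..1}"
      hence "0 < x" using assms by auto
      thus "((\<lambda>x. - h x) has_real_derivative - (\<alpha> - \<alpha> * x powr (\<alpha> - 1))) (at x)"
        by (intro derivative_intros D)
      have "1 powr (\<alpha> - 1) \<le> x powr (\<alpha> - 1)" by (rule powr_mono2') (use x assms \<open>0 < x\<close> in auto)
      hence "1 \<le> x powr (\<alpha> - 1)" by simp
      thus "0 \<le> - (\<alpha> - \<alpha> * x powr (\<alpha> - 1))" using assms
        by (simp add: mult_le_cancel_left1)
    qed (use False in auto)
    thus ?thesis using h1 by simp
  qed
  thus ?thesis by (simp add: h_def)
qed

lemma sg_powr:
  fixes \<alpha> u v :: real
  assumes "0 < \<alpha>" "\<alpha> \<le> 1" "0 < u" "0 \<le> v"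
  shows "v powr \<alpha> \<le> u powr \<alpha> + \<alpha> * u powr (\<alpha> - 1) * (v - u)"
proof -
  have uu: "u powr (\<alpha> - 1) * u = u powr \<alpha>" using assms(3)
    by (simp add: powr_diff)
  show ?thesis
  proof (cases "v = 0")
    case True
    have "\<alpha> * u powr \<alpha> \<le> u powr \<alpha>" using assms by (simp add: mult_left_le_one_le)
    thus ?thesis using True uu by (simp add: algebra_simps)
  next
    case False
    hence v: "0 < v" using assms by simp
    have "(v / u) powr \<alpha> \<le> 1 + \<alpha> * (v / u - 1)" by (rule bern_powr) (use assms v in auto)
    hence "(v / u) powr \<alpha> * u powr \<alpha> \<le> (1 + \<alpha> * (v / u - 1)) * u powr \<alpha>"
      by (rule mult_right_mono) simp
    also have "(v / u) powr \<alpha> * u powr \<alpha> = v powr \<alpha>" using assms v by (simp add: powr_divide)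
    also have "(1 + \<alpha> * (v / u - 1)) * u powr \<alpha> = u powr \<alpha> + \<alpha> * (u powr \<alpha> / u) * (v - u)"
      using assms by (simp add: field_simps)
    also have "u powr \<alpha> / u = u powr (\<alpha> - 1)" using assms(3) by (simp add: powr_diff)
    finally show ?thesis .
  qed
qed

lemma sg_ent:
  fixes u v :: real
  assumes "0 < u" "0 \<le> v"
  shows "- (v * ln v) \<le> - (u * ln u) + (- ln u - 1) * (v - u)"
proof (cases "v = 0")
  case True thus ?thesis using assms by (simp add: algebra_simps)
next
  case False
  hence v: "0 < v" using assms by simp
  have "ln (u / v) \<le> u / v - 1" by (rule ln_le_minus_one) (use assms v in simp)
  hence "ln u - ln v \<le> u / v - 1" using assms v by (simp add: ln_div)
  hence "v * (ln u - ln v) \<le> v * (u / v - 1)" using v by (simp add: mult_left_mono)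
  hence "v * ln u - v * ln v \<le> u - v" using v by (simp add: algebra_simps)
  thus ?thesis by (simp add: algebra_simps)
qed


lemma sum_split_add: "(\<Sum>i<m + n. f i) = (\<Sum>i<m. f i) + (\<Sum>i<n. f (m + i))" for m n :: nat
  by (induction n) (simp_all add: add_ac)

lemma sum_shift1: "(\<Sum>k<d. f (Suc k)) = (\<Sum>k\<in>{1..d}. f k)"
proof -
  have "{1..d} = {Suc 0..<Suc d}" by auto
  hence "(\<Sum>k\<in>{1..d}. f k) = (\<Sum>k\<in>{0..<d}. f (Suc k))" by (simp only: sum.shift_bounds_Suc_ivl)
  thus ?thesis by (simp add: atLeast0LessThan)
qed

definition yv :: "nat \<Rightarrow> (nat \<Rightarrow> nat \<Rightarrow> complex) \<Rightarrow> nat \<Rightarrow> real" where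
  "yv d U k = (if k = 0 then 1 else if k \<le> d then W_vec d U k else 0)"

lemma Y_formula:
  assumes U: "unitary_mat d U" and d: "1 \<le> d"
  shows "(\<Sum>i<Suc k. yv d U i) = (if k = 0 then 1 else if k < d then 1 + s_coef d U k else 2)"
proof (induction k)
  case 0 thus ?case by (simp add: yv_def)
next
  case (Suc k)
  have top: "s_coef d U d = 1" by (rule s_top[OF U d])
  show ?case
  proof (cases "k = 0")
    case True
    thus ?thesis using Suc d top by (cases "d = 1") (auto simp: yv_def W_vec_def)
  next
    case False
    show ?thesis
    proof (cases "Suc k \<le> d")
      case True
      hence "yv d U (Suc k) = s_coef d U (Suc k) - s_coef d U k" using False by (simp add: yv_def W_vec_def)
      moreover have "(\<Sum>i<Suc k. yv d U i) = 1 + s_coef d U k" using Suc False True by simp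
      ultimately show ?thesis using False True top by (cases "Suc k = d") auto
    next
      case F2: False
      hence "yv d U (Suc k) = 0" by (simp add: yv_def)
      moreover have "(\<Sum>i<Suc k. yv d U i) = 2" using Suc False F2 by simp
      ultimately show ?thesis using F2 by simp
    qed
  qed
qed

lemma W_facts:
  assumes U: "unitary_mat d U" and d: "1 \<le> d"
  shows "\<And>k. k \<in> {1..d} \<Longrightarrow> 0 \<le> W_vec d U k" "\<And>k. k \<in> {1..d} \<Longrightarrow> W_vec d U k \<le> 1"
    "(\<Sum>k\<in>{1..d}. W_vec d U k) = 1"
proof -
  fix k assume k: "k \<in> {1..d}"
  show "0 \<le> W_vec d U k"
  proof (cases "k = 1")
    case True thus ?thesis using s_ge0[OF U, of 1] k by (simp add: W_vec_def)
  next
    case False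
    hence "s_coef d U (k - 1) \<le> s_coef d U (Suc (k - 1))" using k by (intro s_mono[OF U]) auto
    thus ?thesis using False k by (simp add: W_vec_def)
  qed
  show "W_vec d U k \<le> 1"
  proof (cases "k = 1")
    case True thus ?thesis using s_le1[OF U, of 1] k by (simp add: W_vec_def)
  next
    case False
    have "s_coef d U k \<le> 1" using s_le1[OF U, of k] k by simp
    moreover have "0 \<le> s_coef d U (k - 1)" by (rule s_ge0[OF U]) (use k False in auto)
    ultimately show ?thesis using False by (simp add: W_vec_def)
  qed
next
  have "(\<Sum>i<Suc d. yv d U i) = 2" using Y_formula[OF U d, of d] d by simp
  also have "(\<Sum>i<Suc d. yv d U i) = yv d U 0 + (\<Sum>i<d. yv d U (Suc i))" by (rule sum.lessThan_Suc_shift)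
  also have "(\<Sum>i<d. yv d U (Suc i)) = (\<Sum>k\<in>{1..d}. yv d U k)" by (rule sum_shift1)
  also have "\<dots> = (\<Sum>k\<in>{1..d}. W_vec d U k)" by (rule sum.cong) (auto simp: yv_def)
  finally show "(\<Sum>k\<in>{1..d}. W_vec d U k) = 1" by (simp add: yv_def)
qed

lemma yv_nonneg:
  assumes U: "unitary_mat d U" and d: "1 \<le> d"
  shows "0 \<le> yv d U k"
  using W_facts(1)[OF U d, of k] by (auto simp: yv_def)

lemma prefix_bound:
  fixes p q :: "nat \<Rightarrow> real"
  assumes U: "unitary_mat d U" and d: "1 \<le> d"
    and p0: "\<And>i. i < d \<Longrightarrow> 0 \<le> p i" and q0: "\<And>i. i < d \<Longrightarrow> 0 \<le> q i"
    and ps: "(\<Sum>i<d. p i) = 1" and qs: "(\<Sum>i<d. q i) = 1"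
    and LP: "\<And>R C. R \<subseteq> {..<d} \<Longrightarrow> C \<subseteq> {..<d} \<Longrightarrow> (\<Sum>i\<in>R. p i) + (\<Sum>j\<in>C. q j) \<le> 1 + submatrix_norm U R C"
    and S: "S \<subseteq> {..<d + d}"
  shows "(\<Sum>i\<in>S. (if i < d then p i else q (i - d))) \<le> (\<Sum>k<card S. yv d U k)"
proof -
  define R where "R = {i\<in>S. i < d}"
  define C' where "C' = {i\<in>S. \<not> i < d}"
  define C where "C = (\<lambda>i. i - d) ` C'"
  have finS: "finite S" using S finite_subset by blast
  have finR: "finite R" and finC': "finite C'" using finS by (auto simp: R_def C'_def)
  have SRC: "S = R \<union> C'" "R \<inter> C' = {}" by (auto simp: R_def C'_def)
  have inj: "inj_on (\<lambda>i. i - d) C'" by (rule inj_onI) (auto simp: C'_def)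
  have Rsub: "R \<subseteq> {..<d}" by (auto simp: R_def)
  have Csub: "C \<subseteq> {..<d}" using S by (auto simp: C_def C'_def)
  have sumS: "(\<Sum>i\<in>S. (if i < d then p i else q (i - d))) = (\<Sum>i\<in>R. p i) + (\<Sum>j\<in>C. q j)"
  proof -
    have "(\<Sum>i\<in>S. (if i < d then p i else q (i - d))) =
        (\<Sum>i\<in>R. (if i < d then p i else q (i - d))) + (\<Sum>i\<in>C'. (if i < d then p i else q (i - d)))"
      unfolding SRC(1) by (rule sum.union_disjoint[OF finR finC' SRC(2)])
    also have "(\<Sum>i\<in>R. (if i < d then p i else q (i - d))) = (\<Sum>i\<in>R. p i)" by (rule sum.cong) (auto simp: R_def)
    also have "(\<Sum>i\<in>C'. (if i < d then p i else q (i - d))) = (\<Sum>i\<in>C'. q (i - d))" by (rule sum.cong) (auto simp: C'_def)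
    also have "\<dots> = (\<Sum>j\<in>C. q j)" unfolding C_def by (simp add: sum.reindex[OF inj])
    finally show ?thesis .
  qed
  have cardS: "card S = card R + card C"
    unfolding SRC(1) C_def using card_Un_disjoint[OF finR finC' SRC(2)] card_image[OF inj] by simp
  have pR: "(\<Sum>i\<in>R. p i) \<le> 1" using ps sum_mono2[of "{..<d}" R p] Rsub p0 by auto
  have qC: "(\<Sum>j\<in>C. q j) \<le> 1" using qs sum_mono2[of "{..<d}" C q] Csub q0 by auto
  have pR0: "0 \<le> (\<Sum>i\<in>R. p i)" using p0 Rsub by (auto intro!: sum_nonneg)
  have qC0: "0 \<le> (\<Sum>j\<in>C. q j)" using q0 Csub by (auto intro!: sum_nonneg)
  show ?thesis
  proof (cases "card S")
    case 0
    hence "S = {}" using finS by simp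
    thus ?thesis by simp
  next
    case (Suc k)
    have Y: "(\<Sum>i<card S. yv d U i) = (if k = 0 then 1 else if k < d then 1 + s_coef d U k else 2)"
      unfolding Suc by (rule Y_formula[OF U d])
    have Y1: "1 \<le> (\<Sum>i<card S. yv d U i)"
      unfolding Y using s_ge0[OF U, of k] by auto
    show ?thesis
    proof (cases "R = {} \<or> C = {}")
      case True
      thus ?thesis unfolding sumS using pR qC Y1 by auto
    next
      case False
      hence ne: "R \<noteq> {}" "C \<noteq> {}" by auto
      have "card R \<ge> 1" "card C \<ge> 1"
        using ne finR finite_subset[OF Csub] by (auto simp: Suc_le_eq card_gt_0_iff)
      hence k1: "k \<ge> 1" and kc: "card R + card C = k + 1" using cardS Suc by auto
      show ?thesis
      proof (cases "k < d")
        case True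
        have "(\<Sum>i\<in>R. p i) + (\<Sum>j\<in>C. q j) \<le> 1 + submatrix_norm U R C" by (rule LP[OF Rsub Csub])
        also have "submatrix_norm U R C \<le> s_coef d U k" by (rule s_upper[OF Rsub Csub ne kc])
        finally show ?thesis unfolding sumS Y using True k1 by auto
      next
        case False
        thus ?thesis unfolding sumS Y using pR qC k1 by auto
      qed
    qed
  qed
qed

lemma key_ineq:
  fixes p q :: "nat \<Rightarrow> real" and \<phi> g :: "real \<Rightarrow> real"
  assumes U: "unitary_mat d U" and d: "1 \<le> d"
    and p0: "\<And>i. i < d \<Longrightarrow> 0 \<le> p i" and q0: "\<And>i. i < d \<Longrightarrow> 0 \<le> q i"
    and ps: "(\<Sum>i<d. p i) = 1" and qs: "(\<Sum>i<d. q i) = 1"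
    and LP: "\<And>R C. R \<subseteq> {..<d} \<Longrightarrow> C \<subseteq> {..<d} \<Longrightarrow> (\<Sum>i\<in>R. p i) + (\<Sum>j\<in>C. q j) \<le> 1 + submatrix_norm U R C"
    and sg: "\<And>u v. 0 < u \<Longrightarrow> 0 \<le> v \<Longrightarrow> \<phi> v \<le> \<phi> u + g u * (v - u)"
    and gmono: "\<And>u v. 0 < u \<Longrightarrow> u \<le> v \<Longrightarrow> g v \<le> g u"
    and \<phi>0: "\<phi> 0 = 0"
  shows "\<phi> 1 + (\<Sum>k\<in>{1..d}. \<phi> (W_vec d U k)) \<le> (\<Sum>i<d. \<phi> (p i)) + (\<Sum>i<d. \<phi> (q i))"
proof -
  define z where "z = (\<lambda>i. if i < d then p i else q (i - d))"
  have dd: "d + d = Suc (d + (d - 1))" using d by simp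
  have zsplit: "(\<Sum>i<d + d. f (z i)) = (\<Sum>i<d. f (p i)) + (\<Sum>i<d. f (q i))" for f :: "real \<Rightarrow> real"
    unfolding sum_split_add by (simp add: z_def)
  have "(\<Sum>i<d + d. \<phi> (yv d U i)) \<le> (\<Sum>i<d + d. \<phi> (z i))"
  proof (rule karamata[where x = z and y = "yv d U" and \<phi> = \<phi> and g = g and n = "d + d"])
    show "\<And>i. i < d + d \<Longrightarrow> 0 \<le> z i" using p0 q0 by (auto simp: z_def)
    show "\<And>i. i < d + d \<Longrightarrow> 0 \<le> yv d U i" using yv_nonneg[OF U d] by blast
    show "\<And>S. S \<subseteq> {..<d + d} \<Longrightarrow> (\<Sum>i\<in>S. z i) \<le> (\<Sum>i<card S. yv d U i)"
      unfolding z_def by (rule prefix_bound[OF U d p0 q0 ps qs LP])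
    have "(\<Sum>i<d + d. z i) = 2" using zsplit[of "\<lambda>t. t"] ps qs by simp
    moreover have "(\<Sum>i<d + d. yv d U i) = 2" unfolding dd Y_formula[OF U d] using d by simp
    ultimately show "(\<Sum>i<d + d. z i) = (\<Sum>i<d + d. yv d U i)" by simp
    show "\<And>u v. 0 < u \<Longrightarrow> 0 \<le> v \<Longrightarrow> \<phi> v \<le> \<phi> u + g u * (v - u)" by (rule sg)
    show "\<And>u v. 0 < u \<Longrightarrow> u \<le> v \<Longrightarrow> g v \<le> g u" by (rule gmono)
  qed
  also have "(\<Sum>i<d + d. \<phi> (z i)) = (\<Sum>i<d. \<phi> (p i)) + (\<Sum>i<d. \<phi> (q i))" by (rule zsplit)
  also have "(\<Sum>i<d + d. \<phi> (yv d U i)) = \<phi> 1 + (\<Sum>k\<in>{1..d}. \<phi> (W_vec d U k))"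
  proof -
    have "(\<Sum>i<d + d. \<phi> (yv d U i)) = \<phi> (yv d U 0) + (\<Sum>i<d + (d - 1). \<phi> (yv d U (Suc i)))"
      unfolding dd by (rule sum.lessThan_Suc_shift)
    also have "(\<Sum>i<d + (d - 1). \<phi> (yv d U (Suc i))) =
        (\<Sum>i<d. \<phi> (yv d U (Suc i))) + (\<Sum>i<d - 1. \<phi> (yv d U (Suc (d + i))))"
      by (rule sum_split_add)
    also have "(\<Sum>i<d - 1. \<phi> (yv d U (Suc (d + i)))) = 0" by (simp add: yv_def \<phi>0)
    also have "(\<Sum>i<d. \<phi> (yv d U (Suc i))) = (\<Sum>k\<in>{1..d}. \<phi> (yv d U k))" by (rule sum_shift1)
    also have "\<dots> = (\<Sum>k\<in>{1..d}. \<phi> (W_vec d U k))" by (rule sum.cong) (auto simp: yv_def)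
    finally show ?thesis by (simp add: yv_def)
  qed
  finally show ?thesis .
qed

theorem theorem2:
  fixes d :: nat and U \<rho> a b :: "nat \<Rightarrow> nat \<Rightarrow> complex" and \<alpha> :: real
  assumes "d \<ge> 1"
    and "unitary_mat d U"
    and "orthonormal_basis d a" and "orthonormal_basis d b"
    and "\<forall>i<d. \<forall>j<d. U i j = cinner d (a i) (b j)"
    and "density_matrix d \<rho>"
    and "0 < \<alpha>" and "\<alpha> \<le> 1"
  shows "renyi \<alpha> {..<d} (\<lambda>i. Re (cinner d (a i) (mat_vec d \<rho> (a i))))
       + renyi \<alpha> {..<d} (\<lambda>j. Re (cinner d (b j) (mat_vec d \<rho> (b j))))
       \<ge> renyi \<alpha> {1..d} (W_vec d U)"
proof -
  note U = assms(2) and d = assms(1)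
  obtain v where v: "\<forall>k<d. \<forall>l<d. \<rho> k l = (\<Sum>m<d. v m k * cnj (v m l))"
    and tr: "(\<Sum>m<d. \<Sum>k<d. (cmod (v m k))\<^sup>2) = 1" using density_gram[OF assms(6)] by blast
  define p where "p = (\<lambda>i. Re (cinner d (a i) (mat_vec d \<rho> (a i))))"
  define q where "q = (\<lambda>j. Re (cinner d (b j) (mat_vec d \<rho> (b j))))"
  have p0: "\<And>i. i < d \<Longrightarrow> 0 \<le> p i" unfolding p_def by (rule prob_nonneg[OF v])
  have q0: "\<And>i. i < d \<Longrightarrow> 0 \<le> q i" unfolding q_def by (rule prob_nonneg[OF v])
  have ps: "(\<Sum>i<d. p i) = 1" unfolding p_def by (rule prob_sum[OF v tr assms(3)])
  have qs: "(\<Sum>i<d. q i) = 1" unfolding q_def by (rule prob_sum[OF v tr assms(4)])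
  have LP: "\<And>R C. R \<subseteq> {..<d} \<Longrightarrow> C \<subseteq> {..<d} \<Longrightarrow> (\<Sum>i\<in>R. p i) + (\<Sum>j\<in>C. q j) \<le> 1 + submatrix_norm U R C"
    unfolding p_def q_def by (rule mixed_LP[OF assms(2,3,4,5) _ _ v tr])
  have p1: "p i \<le> 1" if "i < d" for i
    using member_le_sum[of i "{..<d}" p] p0 that ps by auto
  have q1: "q i \<le> 1" if "i < d" for i
    using member_le_sum[of i "{..<d}" q] q0 that qs by auto
  show ?thesis
    unfolding p_def[symmetric] q_def[symmetric]
  proof (cases "\<alpha> = 1")
    case True
    have "(\<lambda>t::real. - (t * ln t)) 1 + (\<Sum>k\<in>{1..d}. (\<lambda>t. - (t * ln t)) (W_vec d U k))
        \<le> (\<Sum>i<d. (\<lambda>t. - (t * ln t)) (p i)) + (\<Sum>i<d. (\<lambda>t. - (t * ln t)) (q i))"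
    proof (rule key_ineq[OF U d p0 q0 ps qs LP, where \<phi> = "\<lambda>t. - (t * ln t)" and g = "\<lambda>u. - ln u - 1"])
      show "\<And>u w::real. 0 < u \<Longrightarrow> 0 \<le> w \<Longrightarrow> - (w * ln w) \<le> - (u * ln u) + (- ln u - 1) * (w - u)"
        by (rule sg_ent)
      show "\<And>u w::real. 0 < u \<Longrightarrow> u \<le> w \<Longrightarrow> - ln w - 1 \<le> - ln u - 1" by simp
      show "- (0 * ln 0) = (0::real)" by simp
    qed
    thus "renyi \<alpha> {1..d} (W_vec d U) \<le> renyi \<alpha> {..<d} p + renyi \<alpha> {..<d} q"
      using True by (simp add: renyi_def sum_negf)
  next
    case False
    hence a1: "\<alpha> < 1" using assms(8) by simp
    define A where "A = (\<Sum>i<d. p i powr \<alpha>)"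
    define B where "B = (\<Sum>i<d. q i powr \<alpha>)"
    define C where "C = (\<Sum>k\<in>{1..d}. W_vec d U k powr \<alpha>)"
    have "(\<lambda>t::real. t powr \<alpha>) 1 + (\<Sum>k\<in>{1..d}. (\<lambda>t. t powr \<alpha>) (W_vec d U k))
        \<le> (\<Sum>i<d. (\<lambda>t. t powr \<alpha>) (p i)) + (\<Sum>i<d. (\<lambda>t. t powr \<alpha>) (q i))"
    proof (rule key_ineq[OF U d p0 q0 ps qs LP, where \<phi> = "\<lambda>t. t powr \<alpha>" and g = "\<lambda>u. \<alpha> * u powr (\<alpha> - 1)"])
      show "\<And>u w::real. 0 < u \<Longrightarrow> 0 \<le> w \<Longrightarrow> w powr \<alpha> \<le> u powr \<alpha> + \<alpha> * u powr (\<alpha> - 1) * (w - u)"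
        by (rule sg_powr[OF assms(7,8)])
      fix u w :: real assume uv: "0 < u" "u \<le> w"
      have "w powr (\<alpha> - 1) \<le> u powr (\<alpha> - 1)" by (rule powr_mono2') (use uv a1 in auto)
      thus "\<alpha> * w powr (\<alpha> - 1) \<le> \<alpha> * u powr (\<alpha> - 1)" using assms(7) by simp
    next
      show "0 powr \<alpha> = (0::real)" by simp
    qed
    hence key: "1 + C \<le> A + B" by (simp add: A_def B_def C_def)
    have pw: "x \<le> x powr \<alpha>" if "0 \<le> x" "x \<le> 1" for x
    proof -
      have "x powr 1 \<le> x powr \<alpha>" by (rule powr_mono') (use that assms(8) in auto)
      thus ?thesis using that by simp
    qed
    have A1: "1 \<le> A" unfolding A_def ps[symmetric] by (rule sum_mono) (use pw p0 p1 in auto)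
    have B1: "1 \<le> B" unfolding B_def qs[symmetric] by (rule sum_mono) (use pw q0 q1 in auto)
    have C1: "1 \<le> C" unfolding C_def W_facts(3)[OF U d, symmetric]
      by (rule sum_mono) (use pw W_facts(1,2)[OF U d] in auto)
    have "0 \<le> (A - 1) * (B - 1)" using A1 B1 by simp
    hence "C \<le> A * B" using key by (simp add: algebra_simps)
    hence "ln C \<le> ln (A * B)" using C1 by simp
    also have "\<dots> = ln A + ln B" using A1 B1 by (simp add: ln_mult)
    finally have "ln C / (1 - \<alpha>) \<le> (ln A + ln B) / (1 - \<alpha>)" using a1 by (simp add: divide_right_mono)
    thus "renyi \<alpha> {1..d} (W_vec d U) \<le> renyi \<alpha> {..<d} p + renyi \<alpha> {..<d} q"
      using False by (simp add: renyi_def A_def B_def C_def add_divide_distrib)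
  qed
qed

end
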